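(* Let $X$ be a noncommutative space embedded in $\mathcal A^m$ and $e=\tilde E^j\ast E_j$. Equip $TX=\mathcal A^m\ast e$ and $\tilde TX=e\ast{}^m\!\mathcal A$ with the canonical connections $\nabla_i\zeta=\partial_i\zeta-\zeta\ast\partial_ie$ and $\tilde\nabla_i\xi=\partial_i\xi-\partial_i(e)\ast\xi$. Then for all $i,j$: $$\nabla_iE_j=\Gamma_{ij}^k\ast E_k,\qquad \tilde\nabla_i\tilde E^j=-\tilde E^k\ast\Gamma_{ki}^j,$$ and equivalently $\nabla_iE^j=-\tilde\Gamma^j_{ik}\ast E^k$ and $\tilde\nabla_i(E_j)^t=(E_k)^t\ast\tilde\Gamma^k_{ij}$, where $E^j=g^{jk}\ast E_k$.
   Context: $\mathcal A$ denotes the Moyal algebra: for $U\subset\mathbb R^n$ open with coordinates $t$ and $\hbar$ a formal real indeterminate, $\mathcal A$ is the set of formal power series $\sum_{i\ge0}f_i\hbar^i$ with real smooth coefficients on $U$, with product $(f\ast g)(t)=\lim_{t'\to t}\exp\big(\hbar\sum_{i,j}\theta_{ij}\frac{\partial}{\partial t^i}\frac{\partial}{\partial t'^j}\big)f(t)g(t')$ for a fixed constant real skew-symmetric $\theta$ (associative, unital; $\partial_i=\partial/\partial t^i$ are derivations, acting entrywise on matrices). Matrices over $\mathcal A$ are multiplied using $\ast$; $\mathcal A^m$ row vectors, ${}^m\!\mathcal A$ column vectors. Einstein summation. For $X=(X^1,\dots,X^m)\in\mathcal A^m$, $g_{ij}=\sum_\alpha\partial_iX^\alpha\ast\partial_jX^\alpha$;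 $X$ is a noncommutative space embedded in $\mathcal A^m$ if $(g_{ij})$ is invertible, inverse $(g^{ij})$. $E_i=\partial_iX$, $(E_i)^t$ its transpose, $\tilde E^i=(E_j)^t\ast g^{ji}$. Define ${}_c\Gamma_{ijl}=\tfrac12(\partial_ig_{jl}+\partial_jg_{li}-\partial_lg_{ji})$, $\Upsilon_{ijl}=\tfrac12(\partial_i(E_j)\ast(E_l)^t-E_l\ast\partial_i(E_j)^t)$, $\Gamma_{ijl}={}_c\Gamma_{ijl}+\Upsilon_{ijl}$, $\tilde\Gamma_{ijl}={}_c\Gamma_{ijl}-\Upsilon_{ijl}$, $\Gamma_{ij}^k=\Gamma_{ijl}\ast g^{lk}$, $\tilde\Gamma_{ij}^k=g^{kl}\ast\tilde\Gamma_{ijl}$. *)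

theory Defs
  imports "HOL-Analysis.Analysis"
begin

text \<open>An element of the Moyal
algebra is a formal power series in hbar, represented by its coefficient sequence
(coefficient of hbar^p is F p), each coefficient a real function on R^n which is
smooth on U; only its values on U matter (equalities are taken on U).\<close>

type_synonym 'n moyal = "nat \<Rightarrow> real^'n \<Rightarrow> real"

definition pd :: "'n::finite \<Rightarrow> (real^'n \<Rightarrow> real) \<Rightarrow> real^'n \<Rightarrow> real" where
  "pd i f t = deriv (\<lambda>s. f (t + s *\<^sub>R axis i 1)) 0"

primrec pds :: "'n::finite list \<Rightarrow> (real^'n \<Rightarrow> real) \<Rightarrow> real^'n \<Rightarrow> real" where
  "pds [] f = f"
| "pds (i # is) f = pd i (pds is f)"

definition smooth_on :: "(real^'n::finite) set \<Rightarrow> (real^'n \<Rightarrow> real) \<Rightarrow> bool" where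
  "smooth_on U f \<longleftrightarrow> (\<forall>is. continuous_on U (pds is f) \<and>
      (\<forall>i. \<forall>t\<in>U. (\<lambda>s. pds is f (t + s *\<^sub>R axis i 1)) differentiable (at 0)))"

definition moyal_elem :: "(real^'n::finite) set \<Rightarrow> 'n moyal \<Rightarrow> bool" where
  "moyal_elem U F \<longleftrightarrow> (\<forall>p. smooth_on U (F p))"

definition eqU :: "(real^'n::finite) set \<Rightarrow> 'n moyal \<Rightarrow> 'n moyal \<Rightarrow> bool" where
  "eqU U F G \<longleftrightarrow> (\<forall>p. \<forall>t\<in>U. F p t = G p t)"

definition madd :: "'n moyal \<Rightarrow> 'n moyal \<Rightarrow> 'n moyal" where
  "madd F G = (\<lambda>p t. F p t + G p t)"

definition mdiff :: "'n moyal \<Rightarrow> 'n moyal \<Rightarrow> 'n moyal" where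
  "mdiff F G = (\<lambda>p t. F p t - G p t)"

definition mneg :: "'n moyal \<Rightarrow> 'n moyal" where
  "mneg F = (\<lambda>p t. - F p t)"

definition msmult :: "real \<Rightarrow> 'n moyal \<Rightarrow> 'n moyal" where
  "msmult c F = (\<lambda>p t. c * F p t)"

definition msum :: "('b \<Rightarrow> 'n moyal) \<Rightarrow> 'b set \<Rightarrow> 'n moyal" where
  "msum F S = (\<lambda>p t. \<Sum>x\<in>S. F x p t)"

definition mD :: "'n::finite \<Rightarrow> 'n moyal \<Rightarrow> 'n moyal" where
  "mD i F = (\<lambda>p. pd i (F p))"

text \<open>Moyal product: the hbar^p coefficient of
  exp(hbar \<Sum> theta_ij d/dt^i d/dt'^j) f(t) g(t') at t' = t, i.e.
  \<Sum>_{c+a+b=p} 1/c! \<Sum>_{i_1..i_c, j_1..j_c} theta_{i_1 j_1}...theta_{i_c j_c}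
     (d_{i_1}..d_{i_c} f_a)(d_{j_1}..d_{j_c} g_b).\<close>
definition mstar :: "('n::finite \<Rightarrow> 'n \<Rightarrow> real) \<Rightarrow> 'n moyal \<Rightarrow> 'n moyal \<Rightarrow> 'n moyal" where
  "mstar \<theta> F G = (\<lambda>p t. \<Sum>c\<le>p. \<Sum>a\<le>p - c.
      (1 / fact c) * (\<Sum>is\<in>{xs. length xs = c}. \<Sum>js\<in>{xs. length xs = c}.
         (\<Prod>k<c. \<theta> (is ! k) (js ! k)) * pds is (F a) t * pds js (G (p - c - a)) t))"

definition mone :: "'n moyal" where
  "mone = (\<lambda>p t. if p = 0 then 1 else 0)"

definition mzero :: "'n moyal" where
  "mzero = (\<lambda>p t. 0)"

text \<open>X :: 'm \<Rightarrow> 'n moyal is a row vector in A^m.  Coordinate indices i,j,k,l range over 'n,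
ambient indices alpha, beta over 'm.  ginv is (g^{ij}).\<close>

definition metric :: "('n::finite \<Rightarrow> 'n \<Rightarrow> real) \<Rightarrow> ('m::finite \<Rightarrow> 'n moyal) \<Rightarrow> 'n \<Rightarrow> 'n \<Rightarrow> 'n moyal" where
  "metric \<theta> X i j = msum (\<lambda>\<alpha>. mstar \<theta> (mD i (X \<alpha>)) (mD j (X \<alpha>))) UNIV"

definition Evec :: "('m::finite \<Rightarrow> 'n::finite moyal) \<Rightarrow> 'n \<Rightarrow> 'm \<Rightarrow> 'n moyal" where
  "Evec X i \<alpha> = mD i (X \<alpha>)"

definition Etil :: "('n::finite \<Rightarrow> 'n \<Rightarrow> real) \<Rightarrow> ('m::finite \<Rightarrow> 'n moyal) \<Rightarrow> ('n \<Rightarrow> 'n \<Rightarrow> 'n moyal)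
    \<Rightarrow> 'n \<Rightarrow> 'm \<Rightarrow> 'n moyal" where
  "Etil \<theta> X ginv i \<alpha> = msum (\<lambda>j. mstar \<theta> (Evec X j \<alpha>) (ginv j i)) UNIV"

definition Eup :: "('n::finite \<Rightarrow> 'n \<Rightarrow> real) \<Rightarrow> ('m::finite \<Rightarrow> 'n moyal) \<Rightarrow> ('n \<Rightarrow> 'n \<Rightarrow> 'n moyal)
    \<Rightarrow> 'n \<Rightarrow> 'm \<Rightarrow> 'n moyal" where
  "Eup \<theta> X ginv j \<alpha> = msum (\<lambda>k. mstar \<theta> (ginv j k) (Evec X k \<alpha>)) UNIV"

definition eproj :: "('n::finite \<Rightarrow> 'n \<Rightarrow> real) \<Rightarrow> ('m::finite \<Rightarrow> 'n moyal) \<Rightarrow> ('n \<Rightarrow> 'n \<Rightarrow> 'n moyal)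
    \<Rightarrow> 'm \<Rightarrow> 'm \<Rightarrow> 'n moyal" where
  "eproj \<theta> X ginv \<alpha> \<beta> = msum (\<lambda>j. mstar \<theta> (Etil \<theta> X ginv j \<alpha>) (Evec X j \<beta>)) UNIV"

definition nabla :: "('n::finite \<Rightarrow> 'n \<Rightarrow> real) \<Rightarrow> ('m::finite \<Rightarrow> 'n moyal) \<Rightarrow> ('n \<Rightarrow> 'n \<Rightarrow> 'n moyal)
    \<Rightarrow> 'n \<Rightarrow> ('m \<Rightarrow> 'n moyal) \<Rightarrow> 'm \<Rightarrow> 'n moyal" where
  "nabla \<theta> X ginv i \<zeta> \<beta> = mdiff (mD i (\<zeta> \<beta>))
      (msum (\<lambda>\<alpha>. mstar \<theta> (\<zeta> \<alpha>) (mD i (eproj \<theta> X ginv \<alpha> \<beta>))) UNIV)"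

definition nablat :: "('n::finite \<Rightarrow> 'n \<Rightarrow> real) \<Rightarrow> ('m::finite \<Rightarrow> 'n moyal) \<Rightarrow> ('n \<Rightarrow> 'n \<Rightarrow> 'n moyal)
    \<Rightarrow> 'n \<Rightarrow> ('m \<Rightarrow> 'n moyal) \<Rightarrow> 'm \<Rightarrow> 'n moyal" where
  "nablat \<theta> X ginv i \<xi> \<alpha> = mdiff (mD i (\<xi> \<alpha>))
      (msum (\<lambda>\<beta>. mstar \<theta> (mD i (eproj \<theta> X ginv \<alpha> \<beta>)) (\<xi> \<beta>)) UNIV)"

definition cGamma :: "('n::finite \<Rightarrow> 'n \<Rightarrow> real) \<Rightarrow> ('m::finite \<Rightarrow> 'n moyal) \<Rightarrow> 'n \<Rightarrow> 'n \<Rightarrow> 'n \<Rightarrow> 'n moyal" where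
  "cGamma \<theta> X i j l = msmult (1/2)
     (mdiff (madd (mD i (metric \<theta> X j l)) (mD j (metric \<theta> X l i))) (mD l (metric \<theta> X j i)))"

definition Upsilon :: "('n::finite \<Rightarrow> 'n \<Rightarrow> real) \<Rightarrow> ('m::finite \<Rightarrow> 'n moyal) \<Rightarrow> 'n \<Rightarrow> 'n \<Rightarrow> 'n \<Rightarrow> 'n moyal" where
  "Upsilon \<theta> X i j l = msmult (1/2)
     (mdiff (msum (\<lambda>\<alpha>. mstar \<theta> (mD i (Evec X j \<alpha>)) (Evec X l \<alpha>)) UNIV)
            (msum (\<lambda>\<alpha>. mstar \<theta> (Evec X l \<alpha>) (mD i (Evec X j \<alpha>))) UNIV))"

definition Gamma_low :: "('n::finite \<Rightarrow> 'n \<Rightarrow> real) \<Rightarrow> ('m::finite \<Rightarrow> 'n moyal) \<Rightarrow> 'n \<Rightarrow> 'n \<Rightarrow> 'n \<Rightarrow> 'n moyal" where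
  "Gamma_low \<theta> X i j l = madd (cGamma \<theta> X i j l) (Upsilon \<theta> X i j l)"

definition Gammat_low :: "('n::finite \<Rightarrow> 'n \<Rightarrow> real) \<Rightarrow> ('m::finite \<Rightarrow> 'n moyal) \<Rightarrow> 'n \<Rightarrow> 'n \<Rightarrow> 'n \<Rightarrow> 'n moyal" where
  "Gammat_low \<theta> X i j l = mdiff (cGamma \<theta> X i j l) (Upsilon \<theta> X i j l)"

definition Gamma_up :: "('n::finite \<Rightarrow> 'n \<Rightarrow> real) \<Rightarrow> ('m::finite \<Rightarrow> 'n moyal) \<Rightarrow> ('n \<Rightarrow> 'n \<Rightarrow> 'n moyal)
    \<Rightarrow> 'n \<Rightarrow> 'n \<Rightarrow> 'n \<Rightarrow> 'n moyal" where
  "Gamma_up \<theta> X ginv i j k = msum (\<lambda>l. mstar \<theta> (Gamma_low \<theta> X i j l) (ginv l k)) UNIV"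

definition Gammat_up :: "('n::finite \<Rightarrow> 'n \<Rightarrow> real) \<Rightarrow> ('m::finite \<Rightarrow> 'n moyal) \<Rightarrow> ('n \<Rightarrow> 'n \<Rightarrow> 'n moyal)
    \<Rightarrow> 'n \<Rightarrow> 'n \<Rightarrow> 'n \<Rightarrow> 'n moyal" where
  "Gammat_up \<theta> X ginv i j k = msum (\<lambda>l. mstar \<theta> (ginv k l) (Gammat_low \<theta> X i j l)) UNIV"

end

theory Submission
  imports Defs
begin

abbreviation ax :: "'n::finite \<Rightarrow> real^'n" where "ax i \<equiv> axis i (1::real)"

definition pdiff :: "(real^'n::finite) set \<Rightarrow> (real^'n \<Rightarrow> real) \<Rightarrow> bool" where
  "pdiff U h \<longleftrightarrow> (\<forall>i. \<forall>t\<in>U. (\<lambda>s. h (t + s *\<^sub>R ax i)) differentiable (at 0))"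

definition CC :: "(real^'n::finite) set \<Rightarrow> (real^'n \<Rightarrow> real) \<Rightarrow> bool" where
  "CC U h \<longleftrightarrow> continuous_on U h \<and> pdiff U h"

lemma smooth_on_CC: "smooth_on U f \<longleftrightarrow> (\<forall>is. CC U (pds is f))"
  by (simp add: smooth_on_def CC_def pdiff_def)

lemma near_U:
  assumes "open U" "t \<in> U"
  shows "\<forall>\<^sub>F s in nhds 0. t + s *\<^sub>R ax i \<in> U"
proof -
  obtain e where e: "e > 0" "ball t e \<subseteq> U" using assms open_contains_ball by blast
  show ?thesis unfolding eventually_nhds_metric
    by (rule exI[of _ e]) (use e in \<open>auto simp: dist_norm\<close>)
qed

lemma pd_local:
  assumes "open U" "t \<in> U" "\<forall>x\<in>U. f x = g x"
  shows "pd i f t = pd i g t"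
  unfolding pd_def
  by (rule deriv_cong_ev[OF eventually_mono[OF near_U[OF assms(1,2)]]]) (use assms in auto)

lemma pds_local:
  assumes "open U" "\<forall>x\<in>U. f x = g x" "t \<in> U"
  shows "pds is f t = pds is g t"
  using assms(3)
proof (induction "is" arbitrary: t)
  case Nil then show ?case using assms by simp
next
  case (Cons i "is") then show ?case using pd_local[OF assms(1) Cons(2)] by simp
qed

lemma pd_DERIV:
  assumes "(\<lambda>s. h (t + s *\<^sub>R ax i)) differentiable (at 0)"
  shows "((\<lambda>s. h (t + s *\<^sub>R ax i)) has_field_derivative pd i h t) (at 0)"
  using assms unfolding pd_def by (simp add: DERIV_deriv_iff_real_differentiable)

lemma pds_append: "pds (xs @ ys) f = pds xs (pds ys f)"
  by (induction xs) auto

lemma smooth_pds: "smooth_on U f \<Longrightarrow> smooth_on U (pds is f)"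
  unfolding smooth_on_def pds_append[symmetric] by blast

lemma smooth_pd: "smooth_on U f \<Longrightarrow> smooth_on U (pd i f)"
  using smooth_pds[of U f "[i]"] by simp

lemma smooth_diffble: "smooth_on U f \<Longrightarrow> t \<in> U \<Longrightarrow> (\<lambda>s. f (t + s *\<^sub>R ax i)) differentiable (at 0)"
  unfolding smooth_on_def by (drule spec[of _ "[]"]) simp

lemma smooth_cont: "smooth_on U f \<Longrightarrow> continuous_on U f"
  unfolding smooth_on_def by (drule spec[of _ "[]"]) simp

lemma diffble_cong:
  fixes f g :: "real^'n::finite \<Rightarrow> real"
  assumes "open U" "t \<in> U" "\<forall>x\<in>U. f x = g x"
    "(\<lambda>s. g (t + s *\<^sub>R ax i)) differentiable (at 0)"
  shows "(\<lambda>s. f (t + s *\<^sub>R ax i)) differentiable (at 0)"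
proof -
  have ev: "\<forall>\<^sub>F s in nhds 0. f (t + s *\<^sub>R ax i) = g (t + s *\<^sub>R ax i)"
    by (rule eventually_mono[OF near_U[OF assms(1,2)]]) (use assms in auto)
  from assms(4) obtain D where "((\<lambda>s. g (t + s *\<^sub>R ax i)) has_real_derivative D) (at 0)"
    by (auto simp: real_differentiable_def)
  then have "((\<lambda>s. f (t + s *\<^sub>R ax i)) has_real_derivative D) (at 0)"
    using DERIV_cong_ev[OF refl ev refl] by simp
  then show ?thesis by (auto simp: real_differentiable_def)
qed

definition RR :: "(real^'n::finite) set \<Rightarrow> (real^'n \<Rightarrow> real) \<Rightarrow> bool" where
  "RR U h \<longleftrightarrow> (\<exists>L. (\<forall>p\<in>set L. smooth_on U (fst p) \<and> smooth_on U (snd p)) \<and>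
       (\<forall>x\<in>U. h x = (\<Sum>p\<leftarrow>L. fst p x * snd p x)))"

lemma sl_cont:
  assumes "\<forall>p\<in>set L. smooth_on U (fst p) \<and> smooth_on U (snd p)"
  shows "continuous_on U (\<lambda>x. \<Sum>p\<leftarrow>L. fst p x * snd p x)"
  using assms
proof (induction L)
  case Nil then show ?case by simp
next
  case (Cons a L)
  then have c1: "continuous_on U (fst a)" "continuous_on U (snd a)" by (auto intro: smooth_cont)
  from continuous_on_add[OF continuous_on_mult[OF c1] Cons.IH] Cons.prems show ?case by simp
qed

lemma sl_diff:
  assumes "\<forall>p\<in>set L. smooth_on U (fst p) \<and> smooth_on U (snd p)" "t \<in> U"
  shows "((\<lambda>s. \<Sum>p\<leftarrow>L. fst p (t + s *\<^sub>R ax i) * snd p (t + s *\<^sub>R ax i)) has_field_derivative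
          (\<Sum>p\<leftarrow>L. pd i (fst p) t * snd p t + fst p t * pd i (snd p) t)) (at 0)"
  using assms(1)
proof (induction L)
  case Nil then show ?case by simp
next
  case (Cons a L)
  have a: "smooth_on U (fst a)" "smooth_on U (snd a)" using Cons by auto
  have d1: "((\<lambda>s. fst a (t + s *\<^sub>R ax i)) has_field_derivative pd i (fst a) t) (at 0)"
    by (rule pd_DERIV[OF smooth_diffble[OF a(1) assms(2)]])
  have d2: "((\<lambda>s. snd a (t + s *\<^sub>R ax i)) has_field_derivative pd i (snd a) t) (at 0)"
    by (rule pd_DERIV[OF smooth_diffble[OF a(2) assms(2)]])
  have "((\<lambda>s. fst a (t + s *\<^sub>R ax i) * snd a (t + s *\<^sub>R ax i)) has_field_derivative
      pd i (fst a) t * snd a (t + 0 *\<^sub>R ax i) + pd i (snd a) t * fst a (t + 0 *\<^sub>R ax i)) (at 0)"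
    by (rule DERIV_mult[OF d1 d2])
  then have "((\<lambda>s. fst a (t + s *\<^sub>R ax i) * snd a (t + s *\<^sub>R ax i)) has_field_derivative
      pd i (fst a) t * snd a t + fst a t * pd i (snd a) t) (at 0)" by (simp add: mult.commute)
  from DERIV_add[OF this Cons.IH] Cons.prems show ?case by simp
qed

lemma RR_CC:
  assumes "open U" "RR U h" shows "CC U h"
proof -
  obtain L where L: "\<forall>p\<in>set L. smooth_on U (fst p) \<and> smooth_on U (snd p)"
      "\<forall>x\<in>U. h x = (\<Sum>p\<leftarrow>L. fst p x * snd p x)" using assms(2) unfolding RR_def by blast
  have c: "continuous_on U h"
    using continuous_on_cong[THEN iffD1, OF refl _ sl_cont[OF L(1)]] L(2) by auto
  have "pdiff U h" unfolding pdiff_def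
  proof (intro allI ballI)
    fix i t assume t: "t \<in> U"
    show "(\<lambda>s. h (t + s *\<^sub>R ax i)) differentiable (at 0)"
      by (rule diffble_cong[OF assms(1) t L(2)])
        (use sl_diff[OF L(1) t] in \<open>auto simp: real_differentiable_def\<close>)
  qed
  with c show ?thesis by (simp add: CC_def)
qed

lemma pd_sl:
  assumes "open U" "\<forall>p\<in>set L. smooth_on U (fst p) \<and> smooth_on U (snd p)" "t \<in> U"
  shows "pd i (\<lambda>x. \<Sum>p\<leftarrow>L. fst p x * snd p x) t =
     (\<Sum>p\<leftarrow>L. pd i (fst p) t * snd p t + fst p t * pd i (snd p) t)"
  using sl_diff[OF assms(2,3), of i] unfolding pd_def by (simp add: DERIV_imp_deriv)

lemma RR_pd:
  assumes "open U" "RR U h" shows "RR U (pd i h)"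
proof -
  obtain L where L: "\<forall>p\<in>set L. smooth_on U (fst p) \<and> smooth_on U (snd p)"
      "\<forall>x\<in>U. h x = (\<Sum>p\<leftarrow>L. fst p x * snd p x)" using assms(2) unfolding RR_def by blast
  define L2 where "L2 = map (\<lambda>p. (pd i (fst p), snd p)) L @ map (\<lambda>p. (fst p, pd i (snd p))) L"
  have "\<forall>p\<in>set L2. smooth_on U (fst p) \<and> smooth_on U (snd p)"
    using L(1) by (auto simp: L2_def smooth_pd)
  moreover have "\<forall>x\<in>U. pd i h x = (\<Sum>p\<leftarrow>L2. fst p x * snd p x)"
  proof
    fix x assume x: "x \<in> U"
    have "pd i h x = pd i (\<lambda>x. \<Sum>p\<leftarrow>L. fst p x * snd p x) x"
      by (rule pd_local[OF assms(1) x L(2)])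
    also have "\<dots> = (\<Sum>p\<leftarrow>L. pd i (fst p) x * snd p x + fst p x * pd i (snd p) x)"
      by (rule pd_sl[OF assms(1) L(1) x])
    also have "\<dots> = (\<Sum>p\<leftarrow>L2. fst p x * snd p x)"
      by (simp add: L2_def sum_list_addf o_def)
    finally show "pd i h x = (\<Sum>p\<leftarrow>L2. fst p x * snd p x)" .
  qed
  ultimately show ?thesis unfolding RR_def by blast
qed

lemma RR_smooth:
  assumes "open U" "RR U h" shows "smooth_on U h"
proof -
  have "RR U (pds is h)" for "is"
    by (induction "is") (auto simp: assms RR_pd)
  then show ?thesis unfolding smooth_on_CC using RR_CC[OF assms(1)] by blast
qed

lemma smooth_const: "smooth_on U (\<lambda>x. c)"
proof -
  have h: "pds is (\<lambda>x. c) x = (if is = [] then c else 0)" for "is" x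
  proof -
    have "pds is (\<lambda>x. c) = (if is = [] then (\<lambda>x. c) else (\<lambda>x. 0))"
      by (induction "is") (auto simp: pd_def)
    then show ?thesis by simp
  qed
  show ?thesis unfolding smooth_on_def h
    by (auto simp: continuous_on_const)
qed

lemma smooth_mult:
  assumes "open U" "smooth_on U f" "smooth_on U g"
  shows "smooth_on U (\<lambda>x. f x * g x)"
  by (rule RR_smooth[OF assms(1)]) (unfold RR_def, rule exI[of _ "[(f,g)]"], use assms in auto)

lemma smooth_add:
  assumes "open U" "smooth_on U f" "smooth_on U g"
  shows "smooth_on U (\<lambda>x. f x + g x)"
  by (rule RR_smooth[OF assms(1)]) (unfold RR_def, rule exI[of _ "[(f,\<lambda>x. 1),(g, \<lambda>x. 1)]"],
      use assms smooth_const in auto)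

lemma smooth_cmult:
  assumes "open U" "smooth_on U f"
  shows "smooth_on U (\<lambda>x. c * f x)"
  using smooth_mult[OF assms(1) smooth_const assms(2)] .

lemma smooth_local:
  assumes "open U" "smooth_on U f" "\<forall>x\<in>U. g x = f x"
  shows "smooth_on U g"
  by (rule RR_smooth[OF assms(1)]) (unfold RR_def, rule exI[of _ "[(f,\<lambda>x. 1)]"],
      use assms smooth_const in auto)

lemma smooth_sum:
  assumes "open U" "\<And>k. k \<in> S \<Longrightarrow> smooth_on U (F k)"
  shows "smooth_on U (\<lambda>x. \<Sum>k\<in>S. F k x)"
  using assms(2)
proof (induction S rule: infinite_finite_induct)
  case (infinite A) then show ?case by (simp add: smooth_const)
next
  case empty then show ?case by (simp add: smooth_const)
next
  case (insert a A)
  have "smooth_on U (\<lambda>x. F a x + (\<Sum>k\<in>A. F k x))"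
    by (rule smooth_add[OF assms(1)]) (use insert in auto)
  then show ?case using insert(1,2) by simp
qed

lemma pd_mult:
  assumes "smooth_on U f" "smooth_on U g" "t \<in> U"
  shows "pd i (\<lambda>x. f x * g x) t = pd i f t * g t + f t * pd i g t"
proof -
  have "((\<lambda>s. f (t + s *\<^sub>R ax i) * g (t + s *\<^sub>R ax i)) has_field_derivative
      pd i f t * g (t + 0 *\<^sub>R ax i) + pd i g t * f (t + 0 *\<^sub>R ax i)) (at 0)"
    by (rule DERIV_mult[OF pd_DERIV[OF smooth_diffble[OF assms(1,3)]] pd_DERIV[OF smooth_diffble[OF assms(2,3)]]])
  then show ?thesis unfolding pd_def by (simp add: DERIV_imp_deriv mult.commute)
qed

lemma pd_sum:
  assumes "finite S" "\<And>k. k \<in> S \<Longrightarrow> smooth_on U (F k)" "t \<in> U"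
  shows "pd i (\<lambda>x. \<Sum>k\<in>S. F k x) t = (\<Sum>k\<in>S. pd i (F k) t)"
proof -
  have "((\<lambda>s. \<Sum>k\<in>S. F k (t + s *\<^sub>R ax i)) has_field_derivative (\<Sum>k\<in>S. pd i (F k) t)) (at 0)"
    by (rule DERIV_sum) (rule pd_DERIV[OF smooth_diffble[OF assms(2) assms(3)]])
  then show ?thesis unfolding pd_def by (simp add: DERIV_imp_deriv)
qed

lemma pd_cmult:
  assumes "smooth_on U f" "t \<in> U"
  shows "pd i (\<lambda>x. c * f x) t = c * pd i f t"
  using pd_mult[OF smooth_const[of U c] assms, of i] by (simp add: pd_def)

lemma pd_add:
  assumes "smooth_on U f" "smooth_on U g" "t \<in> U"
  shows "pd i (\<lambda>x. f x + g x) t = pd i f t + pd i g t"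
proof -
  have "((\<lambda>s. f (t + s *\<^sub>R ax i) + g (t + s *\<^sub>R ax i)) has_field_derivative
      pd i f t + pd i g t) (at 0)"
    by (rule DERIV_add[OF pd_DERIV[OF smooth_diffble[OF assms(1,3)]] pd_DERIV[OF smooth_diffble[OF assms(2,3)]]])
  then show ?thesis unfolding pd_def by (simp add: DERIV_imp_deriv)
qed


lemma partial_at:
  assumes "smooth_on U g" "q + x0 *\<^sub>R ax i \<in> U"
  shows "((\<lambda>x. g (q + x *\<^sub>R ax i)) has_field_derivative pd i g (q + x0 *\<^sub>R ax i)) (at x0)"
proof -
  let ?p = "q + x0 *\<^sub>R ax i"
  have d: "((\<lambda>s. g (?p + s *\<^sub>R ax i)) has_field_derivative pd i g ?p) (at 0)"
    by (rule pd_DERIV[OF smooth_diffble[OF assms]])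
  have e: "(\<lambda>s. g (?p + s *\<^sub>R ax i)) = (\<lambda>s. (\<lambda>x. g (q + x *\<^sub>R ax i)) (s + x0))"
    by (auto simp: algebra_simps)
  from d have "((\<lambda>s. (\<lambda>x. g (q + x *\<^sub>R ax i)) (s + x0)) has_field_derivative pd i g ?p) (at 0)"
    by (simp only: e)
  then have "((\<lambda>x. g (q + x *\<^sub>R ax i)) has_field_derivative pd i g ?p) (at (0 + x0))"
    by (simp only: DERIV_shift)
  then show ?thesis by simp
qed

lemma mvt_dir2:
  assumes "smooth_on U g" "h > 0"
    "\<And>x. 0 \<le> x \<Longrightarrow> x \<le> h \<Longrightarrow> q1 + x *\<^sub>R ax i \<in> U \<and> q0 + x *\<^sub>R ax i \<in> U"
  shows "\<exists>\<xi>. 0 < \<xi> \<and> \<xi> < h \<and> (g (q1 + h *\<^sub>R ax i) - g (q0 + h *\<^sub>R ax i)) - (g q1 - g q0)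
      = h * (pd i g (q1 + \<xi> *\<^sub>R ax i) - pd i g (q0 + \<xi> *\<^sub>R ax i))"
proof -
  have "\<exists>z. 0 < z \<and> z < h \<and> ((\<lambda>x. g (q1 + x *\<^sub>R ax i) - g (q0 + x *\<^sub>R ax i)) h -
     (\<lambda>x. g (q1 + x *\<^sub>R ax i) - g (q0 + x *\<^sub>R ax i)) 0
     = (h - 0) * (\<lambda>x. pd i g (q1 + x *\<^sub>R ax i) - pd i g (q0 + x *\<^sub>R ax i)) z)"
    by (rule MVT2[OF assms(2)]) (intro DERIV_diff partial_at[OF assms(1)]; use assms(3) in blast)
  then show ?thesis by simp
qed

lemma mvt_dir:
  assumes "smooth_on U g" "h > 0"
    "\<And>x. 0 \<le> x \<Longrightarrow> x \<le> h \<Longrightarrow> q + x *\<^sub>R ax i \<in> U"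
  shows "\<exists>\<xi>. 0 < \<xi> \<and> \<xi> < h \<and> g (q + h *\<^sub>R ax i) - g q = h * pd i g (q + \<xi> *\<^sub>R ax i)"
proof -
  have "\<exists>z. 0 < z \<and> z < h \<and> (\<lambda>x. g (q + x *\<^sub>R ax i)) h - (\<lambda>x. g (q + x *\<^sub>R ax i)) 0
     = (h - 0) * (\<lambda>x. pd i g (q + x *\<^sub>R ax i)) z"
    by (rule MVT2[OF assms(2)]) (intro partial_at[OF assms(1)]; use assms(3) in blast)
  then show ?thesis by simp
qed

lemma schwarz:
  assumes U: "open U" and f: "smooth_on U f" and t: "t \<in> U"
  shows "pd i (pd j f) t = pd j (pd i f) t"
proof (cases "i = j")
  case True then show ?thesis by simp
next
  case False
  let ?a = "ax i" and ?b = "ax j"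
  define A where "A = pd j (pd i f)"
  define B where "B = pd i (pd j f)"
  obtain r where r: "r > 0" "ball t r \<subseteq> U" using U t open_contains_ball by blast
  have inU: "t + x *\<^sub>R ?a + y *\<^sub>R ?b \<in> U" if "0 \<le> x" "x \<le> h" "0 \<le> y" "y \<le> h" "2 * h < r" for x y h
  proof -
    have "norm (x *\<^sub>R ?a + y *\<^sub>R ?b) \<le> norm (x *\<^sub>R ?a) + norm (y *\<^sub>R ?b)" by (rule norm_triangle_ineq)
    also have "\<dots> = x + y" using that by simp
    moreover have "dist t (t + (x *\<^sub>R ?a + y *\<^sub>R ?b)) = norm (x *\<^sub>R ?a + y *\<^sub>R ?b)"
      by (metis add_diff_cancel_left' dist_commute dist_norm)
    ultimately have "dist t (t + x *\<^sub>R ?a + y *\<^sub>R ?b) < r" using that by (simp add: add.assoc)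
    then show ?thesis using r by auto
  qed
  have key: "\<exists>p q. dist p t \<le> 2 * h \<and> dist q t \<le> 2 * h \<and> p \<in> U \<and> q \<in> U \<and> A p = B q"
    if h: "h > 0" "2 * h < r" for h
  proof -
    define D where "D = f (t + h *\<^sub>R ?a + h *\<^sub>R ?b) - f (t + h *\<^sub>R ?a) - f (t + h *\<^sub>R ?b) + f t"
    have U1: "(t + h *\<^sub>R ?b) + x *\<^sub>R ?a \<in> U \<and> t + x *\<^sub>R ?a \<in> U" if "0 \<le> x" "x \<le> h" for x
      using inU[OF that _ _ h(2), of h] inU[OF that _ _ h(2), of 0] h(1) by (simp add: algebra_simps)
    obtain \<xi> where \<xi>: "0 < \<xi>" "\<xi> < h" "(f ((t + h *\<^sub>R ?b) + h *\<^sub>R ?a) - f (t + h *\<^sub>R ?a)) - (f (t + h *\<^sub>R ?b) - f t)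
      = h * (pd i f ((t + h *\<^sub>R ?b) + \<xi> *\<^sub>R ?a) - pd i f (t + \<xi> *\<^sub>R ?a))"
      using mvt_dir2[OF f h(1) U1] by blast
    have U2: "(t + \<xi> *\<^sub>R ?a) + y *\<^sub>R ?b \<in> U" if "0 \<le> y" "y \<le> h" for y
      using inU[OF _ _ that h(2), of \<xi>] \<xi> by simp
    obtain \<eta> where \<eta>: "0 < \<eta>" "\<eta> < h" "pd i f ((t + \<xi> *\<^sub>R ?a) + h *\<^sub>R ?b) - pd i f (t + \<xi> *\<^sub>R ?a)
       = h * pd j (pd i f) ((t + \<xi> *\<^sub>R ?a) + \<eta> *\<^sub>R ?b)"
      using mvt_dir[OF smooth_pd[OF f] h(1) U2] by blast
    have D1: "D = h * h * A (t + \<xi> *\<^sub>R ?a + \<eta> *\<^sub>R ?b)"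
    proof -
      have "D = h * (pd i f ((t + \<xi> *\<^sub>R ?a) + h *\<^sub>R ?b) - pd i f (t + \<xi> *\<^sub>R ?a))"
        using \<xi>(3) unfolding D_def by (simp add: algebra_simps)
      then show ?thesis using \<eta>(3) by (simp add: A_def)
    qed
    have U3: "(t + h *\<^sub>R ?a) + y *\<^sub>R ?b \<in> U \<and> t + y *\<^sub>R ?b \<in> U" if "0 \<le> y" "y \<le> h" for y
      using inU[OF _ _ that h(2), of h] inU[OF _ _ that h(2), of 0] h(1) by (simp add: algebra_simps)
    obtain \<zeta> where \<zeta>: "0 < \<zeta>" "\<zeta> < h" "(f ((t + h *\<^sub>R ?a) + h *\<^sub>R ?b) - f (t + h *\<^sub>R ?b)) - (f (t + h *\<^sub>R ?a) - f t)
      = h * (pd j f ((t + h *\<^sub>R ?a) + \<zeta> *\<^sub>R ?b) - pd j f (t + \<zeta> *\<^sub>R ?b))"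
      using mvt_dir2[OF f h(1) U3] by blast
    have U4: "(t + \<zeta> *\<^sub>R ?b) + x *\<^sub>R ?a \<in> U" if "0 \<le> x" "x \<le> h" for x
      using inU[OF that _ _ h(2), of \<zeta>] \<zeta> by (simp add: algebra_simps)
    obtain \<omega> where \<omega>: "0 < \<omega>" "\<omega> < h" "pd j f ((t + \<zeta> *\<^sub>R ?b) + h *\<^sub>R ?a) - pd j f (t + \<zeta> *\<^sub>R ?b)
       = h * pd i (pd j f) ((t + \<zeta> *\<^sub>R ?b) + \<omega> *\<^sub>R ?a)"
      using mvt_dir[OF smooth_pd[OF f] h(1) U4] by blast
    have D2: "D = h * h * B (t + \<omega> *\<^sub>R ?a + \<zeta> *\<^sub>R ?b)"
    proof -
      have "D = h * (pd j f ((t + \<zeta> *\<^sub>R ?b) + h *\<^sub>R ?a) - pd j f (t + \<zeta> *\<^sub>R ?b))"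
        using \<zeta>(3) unfolding D_def by (simp add: algebra_simps)
      then show ?thesis using \<omega>(3) by (simp add: B_def algebra_simps)
    qed
    have "A (t + \<xi> *\<^sub>R ?a + \<eta> *\<^sub>R ?b) = B (t + \<omega> *\<^sub>R ?a + \<zeta> *\<^sub>R ?b)"
      using D1 D2 h by simp
    moreover have "dist (t + x *\<^sub>R ?a + y *\<^sub>R ?b) t \<le> 2 * h" if "0 \<le> x" "x \<le> h" "0 \<le> y" "y \<le> h" for x y
    proof -
      have "norm (x *\<^sub>R ?a + y *\<^sub>R ?b) \<le> norm (x *\<^sub>R ?a) + norm (y *\<^sub>R ?b)" by (rule norm_triangle_ineq)
      also have "\<dots> = x + y" using that by simp
      finally show ?thesis using that by (simp add: dist_norm add.assoc)
    qed
    moreover have "t + \<xi> *\<^sub>R ?a + \<eta> *\<^sub>R ?b \<in> U" "t + \<omega> *\<^sub>R ?a + \<zeta> *\<^sub>R ?b \<in> U"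
      using inU[OF _ _ _ _ h(2)] \<xi> \<eta> \<zeta> \<omega> by auto
    ultimately show ?thesis using \<xi> \<eta> \<zeta> \<omega> by (intro exI conjI) auto
  qed
  have cA: "continuous_on U A" unfolding A_def by (rule smooth_cont[OF smooth_pd[OF smooth_pd[OF f]]])
  have cB: "continuous_on U B" unfolding B_def by (rule smooth_cont[OF smooth_pd[OF smooth_pd[OF f]]])
  have "A t = B t"
  proof (rule ccontr)
    assume ne: "A t \<noteq> B t"
    define e where "e = \<bar>A t - B t\<bar> / 2"
    have e: "e > 0" using ne by (simp add: e_def)
    obtain d1 where d1: "d1 > 0" "\<forall>x'\<in>U. dist x' t < d1 \<longrightarrow> dist (A x') (A t) < e"
      using cA t e unfolding continuous_on_iff by blast
    obtain d2 where d2: "d2 > 0" "\<forall>x'\<in>U. dist x' t < d2 \<longrightarrow> dist (B x') (B t) < e"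
      using cB t e unfolding continuous_on_iff by blast
    define h where "h = min (min d1 d2) r / 4"
    have h: "h > 0" "2 * h < r" "2 * h < d1" "2 * h < d2" using d1 d2 r by (auto simp: h_def)
    obtain p q where pq: "dist p t \<le> 2 * h" "dist q t \<le> 2 * h" "p \<in> U" "q \<in> U" "A p = B q"
      using key[OF h(1,2)] by blast
    have "dist (A p) (A t) < e" using d1 pq h by auto
    moreover have "dist (B q) (B t) < e" using d2 pq h by auto
    ultimately have "\<bar>A t - B t\<bar> < 2 * e" using pq(5) by (simp add: dist_real_def)
    then show False by (simp add: e_def)
  qed
  then show ?thesis by (simp add: A_def B_def)
qed


lemma pd_pds_commute:
  assumes U: "open U" and f: "smooth_on U f" and t: "t \<in> U"
  shows "pd i (pds is f) t = pds is (pd i f) t"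
  using t
proof (induction "is" arbitrary: t)
  case Nil then show ?case by simp
next
  case (Cons k ks)
  have "pd i (pds (k # ks) f) t = pd i (pd k (pds ks f)) t" by simp
  also have "\<dots> = pd k (pd i (pds ks f)) t"
    by (rule schwarz[OF U smooth_pds[OF f] Cons.prems])
  also have "\<dots> = pd k (pds ks (pd i f)) t"
    by (rule pd_local[OF U Cons.prems]) (use Cons.IH in auto)
  finally show ?case by simp
qed

lemma pds_lin:
  assumes U: "open U" and S: "finite S" and F: "\<And>k. k \<in> S \<Longrightarrow> smooth_on U (F k)" and x: "x \<in> U"
  shows "pds is (\<lambda>y. \<Sum>k\<in>S. a k * F k y) x = (\<Sum>k\<in>S. a k * pds is (F k) x)"
  using x
proof (induction "is" arbitrary: x)
  case Nil then show ?case by simp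
next
  case (Cons i "is")
  have "pds (i # is) (\<lambda>y. \<Sum>k\<in>S. a k * F k y) x = pd i (pds is (\<lambda>y. \<Sum>k\<in>S. a k * F k y)) x" by simp
  also have "\<dots> = pd i (\<lambda>y. \<Sum>k\<in>S. a k * pds is (F k) y) x"
    by (rule pd_local[OF U Cons.prems]) (use Cons.IH in auto)
  also have "\<dots> = (\<Sum>k\<in>S. pd i (\<lambda>y. a k * pds is (F k) y) x)"
    by (rule pd_sum[OF S _ Cons.prems]) (rule smooth_cmult[OF U smooth_pds[OF F]])
  also have "\<dots> = (\<Sum>k\<in>S. a k * pd i (pds is (F k)) x)"
    by (rule sum.cong[OF refl]) (rule pd_cmult[OF smooth_pds[OF F] Cons.prems])
  finally show ?case by simp
qed

lemma pds_add:
  assumes U: "open U" and f: "smooth_on U f" and g: "smooth_on U g" and x: "x \<in> U"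
  shows "pds is (\<lambda>y. f y + g y) x = pds is f x + pds is g x"
  using pds_lin[OF U, where S="{True,False}" and F="\<lambda>b. if b then f else g" and a="\<lambda>_. 1" and x=x] f g x by simp

definition T :: "('n::finite \<Rightarrow> 'n \<Rightarrow> real) \<Rightarrow> nat \<Rightarrow> (real^'n \<Rightarrow> real) \<Rightarrow> (real^'n \<Rightarrow> real) \<Rightarrow> real^'n \<Rightarrow> real" where
  "T \<theta> c f g t = (\<Sum>is\<in>{xs. length xs = c}. \<Sum>js\<in>{xs. length xs = c}.
         (\<Prod>k<c. \<theta> (is ! k) (js ! k)) * pds is f t * pds js g t)"

lemma mstar_T: "mstar \<theta> F G p t = (\<Sum>c\<le>p. \<Sum>a\<le>p - c. (1 / fact c) * T \<theta> c (F a) (G (p - c - a)) t)"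
  unfolding mstar_def T_def by simp

lemma finite_len: "finite {xs :: ('n::finite) list. length xs = c}"
  using finite_lists_length_eq[of "UNIV :: 'n set" c] by simp

lemma sum_lists_Suc:
  "(\<Sum>xs\<in>{xs :: ('n::finite) list. length xs = Suc c}. F xs) = (\<Sum>i\<in>UNIV. \<Sum>xs\<in>{xs. length xs = c}. F (i # xs))"
proof -
  have e: "{xs :: 'n list. length xs = Suc c} = (\<lambda>(i,xs). i # xs) ` (UNIV \<times> {xs. length xs = c})"
    by (auto simp: length_Suc_conv image_def)
  have inj: "inj_on (\<lambda>(i,xs). i # xs) (UNIV \<times> {xs :: 'n list. length xs = c})"
    by (auto simp: inj_on_def)
  show ?thesis unfolding e sum.reindex[OF inj] o_def
    by (simp add: sum.cartesian_product split_def)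
qed

lemma T_0: "T \<theta> 0 f g t = f t * g t"
proof -
  have "{xs :: 'a list. length xs = 0} = {[]}" by auto
  then show ?thesis unfolding T_def by simp
qed

lemma T_local:
  assumes "open U" "\<forall>x\<in>U. f x = f' x" "\<forall>x\<in>U. g x = g' x" "t \<in> U"
  shows "T \<theta> c f g t = T \<theta> c f' g' t"
  unfolding T_def using pds_local[OF assms(1,2,4)] pds_local[OF assms(1,3,4)] by simp

lemma T_smooth:
  assumes U: "open U" and f: "smooth_on U f" and g: "smooth_on U g"
  shows "smooth_on U (T \<theta> c f g)"
proof -
  have "smooth_on U (\<lambda>t. \<Sum>is\<in>{xs. length xs = c}. \<Sum>js\<in>{xs. length xs = c}.
         (\<Prod>k<c. \<theta> (is ! k) (js ! k)) * pds is f t * pds js g t)"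
    by (intro smooth_sum[OF U] smooth_mult[OF U] smooth_cmult[OF U] smooth_pds f g)
  then show ?thesis unfolding T_def[abs_def] by simp
qed

lemma T_lin1:
  assumes U: "open U" and S: "finite S" and F: "\<And>k. k \<in> S \<Longrightarrow> smooth_on U (F k)" and t: "t \<in> U"
  shows "T \<theta> c (\<lambda>x. \<Sum>k\<in>S. a k * F k x) g t = (\<Sum>k\<in>S. a k * T \<theta> c (F k) g t)"
  unfolding T_def
  by (simp add: pds_lin[OF U S F t] sum_distrib_left sum_distrib_right sum.swap[of _ S] algebra_simps)

lemma T_lin2:
  assumes U: "open U" and S: "finite S" and F: "\<And>k. k \<in> S \<Longrightarrow> smooth_on U (F k)" and t: "t \<in> U"
  shows "T \<theta> c g (\<lambda>x. \<Sum>k\<in>S. a k * F k x) t = (\<Sum>k\<in>S. a k * T \<theta> c g (F k) t)"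
  unfolding T_def
  by (simp add: pds_lin[OF U S F t] sum_distrib_left sum_distrib_right sum.swap[of _ S] algebra_simps)

lemma T_Suc:
  assumes U: "open U" and f: "smooth_on U f" and g: "smooth_on U g" and t: "t \<in> U"
  shows "T \<theta> (Suc c) f g t = (\<Sum>i\<in>UNIV. \<Sum>j\<in>UNIV. \<theta> i j * T \<theta> c (pd i f) (pd j g) t)"
proof -
  have "T \<theta> (Suc c) f g t = (\<Sum>i\<in>UNIV. \<Sum>is\<in>{xs. length xs = c}. \<Sum>j\<in>UNIV. \<Sum>js\<in>{xs. length xs = c}.
     \<theta> i j * ((\<Prod>k<c. \<theta> (is ! k) (js ! k)) * pds is (pd i f) t * pds js (pd j g) t))"
    unfolding T_def sum_lists_Suc
    by (simp del: prod.lessThan_Suc add: prod.lessThan_Suc_shift pd_pds_commute[OF U f t] pd_pds_commute[OF U g t] algebra_simps)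
  also have "\<dots> = (\<Sum>i\<in>UNIV. \<Sum>j\<in>UNIV. \<Sum>is\<in>{xs. length xs = c}. \<Sum>js\<in>{xs. length xs = c}.
     \<theta> i j * ((\<Prod>k<c. \<theta> (is ! k) (js ! k)) * pds is (pd i f) t * pds js (pd j g) t))"
    by (rule sum.cong[OF refl], rule sum.swap)
  also have "\<dots> = (\<Sum>i\<in>UNIV. \<Sum>j\<in>UNIV. \<theta> i j * T \<theta> c (pd i f) (pd j g) t)"
    unfolding T_def by (simp add: sum_distrib_left)
  finally show ?thesis .
qed

lemma pd_cmult2:
  assumes U: "open U" and "smooth_on U u" "smooth_on U v" "t \<in> U"
  shows "pd i (\<lambda>x. c * u x * v x) t = c * (pd i u t * v t + u t * pd i v t)"
proof -
  have "pd i (\<lambda>x. c * u x * v x) t = pd i (\<lambda>x. c * (u x * v x)) t" by (simp add: mult.assoc)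
  also have "\<dots> = c * pd i (\<lambda>x. u x * v x) t" by (rule pd_cmult) (use assms in \<open>auto intro: smooth_mult[OF U]\<close>)
  also have "\<dots> = c * (pd i u t * v t + u t * pd i v t)" using pd_mult[OF assms(2-4)] by simp
  finally show ?thesis .
qed


lemma T_deriv:
  assumes U: "open U" and f: "smooth_on U f" and g: "smooth_on U g" and t: "t \<in> U"
  shows "pd k (T \<theta> c f g) t = T \<theta> c (pd k f) g t + T \<theta> c f (pd k g) t"
proof -
  let ?A = "{xs :: 'a list. length xs = c}"
  let ?P = "\<lambda>is js. \<Prod>k<c. \<theta> (is ! k) (js ! k)"
  have e: "T \<theta> c f g = (\<lambda>t. \<Sum>is\<in>?A. \<Sum>js\<in>?A. ?P is js * pds is f t * pds js g t)"
    unfolding T_def[abs_def] by simp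
  have "pd k (T \<theta> c f g) t = (\<Sum>is\<in>?A. pd k (\<lambda>t. \<Sum>js\<in>?A. ?P is js * pds is f t * pds js g t) t)"
    unfolding e
    by (rule pd_sum[OF finite_len _ t]) (intro smooth_sum[OF U] smooth_mult[OF U] smooth_cmult[OF U] smooth_pds f g)
  also have "\<dots> = (\<Sum>is\<in>?A. \<Sum>js\<in>?A. pd k (\<lambda>t. ?P is js * pds is f t * pds js g t) t)"
    by (rule sum.cong[OF refl], rule pd_sum[OF finite_len _ t])
      (intro smooth_sum[OF U] smooth_mult[OF U] smooth_cmult[OF U] smooth_pds f g)
  also have "\<dots> = (\<Sum>is\<in>?A. \<Sum>js\<in>?A. ?P is js * (pd k (pds is f) t * pds js g t + pds is f t * pd k (pds js g) t))"
    by (intro sum.cong refl pd_cmult2[OF U smooth_pds[OF f] smooth_pds[OF g] t])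
  also have "\<dots> = T \<theta> c (pd k f) g t + T \<theta> c f (pd k g) t"
    unfolding T_def pd_pds_commute[OF U f t] pd_pds_commute[OF U g t]
    by (simp add: sum.distrib algebra_simps)
  finally show ?thesis .
qed

lemma T_lin1_2:
  fixes F :: "'n::finite \<Rightarrow> 'n \<Rightarrow> real^'n \<Rightarrow> real"
  assumes U: "open U" and F: "\<And>i j. smooth_on U (F i j)" and t: "t \<in> U"
  shows "T \<theta> c (\<lambda>x. \<Sum>i\<in>UNIV. \<Sum>j\<in>UNIV. a i j * F i j x) g t = (\<Sum>i\<in>UNIV. \<Sum>j\<in>UNIV. a i j * T \<theta> c (F i j) g t)"
proof -
  have e: "\<And>G :: _ \<Rightarrow> _ \<Rightarrow> real. (\<Sum>i\<in>UNIV. \<Sum>j\<in>UNIV. G i j) = (\<Sum>p\<in>UNIV. G (fst p) (snd p))"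
    by (simp add: sum.cartesian_product split_def)
  show ?thesis unfolding e
    by (rule T_lin1[OF U, where F="\<lambda>p. F (fst p) (snd p)", OF _ _ t]) (use F in auto)
qed

lemma T_lin2_2:
  fixes F :: "'n::finite \<Rightarrow> 'n \<Rightarrow> real^'n \<Rightarrow> real"
  assumes U: "open U" and F: "\<And>i j. smooth_on U (F i j)" and t: "t \<in> U"
  shows "T \<theta> c g (\<lambda>x. \<Sum>i\<in>UNIV. \<Sum>j\<in>UNIV. a i j * F i j x) t = (\<Sum>i\<in>UNIV. \<Sum>j\<in>UNIV. a i j * T \<theta> c g (F i j) t)"
proof -
  have e: "\<And>G :: _ \<Rightarrow> _ \<Rightarrow> real. (\<Sum>i\<in>UNIV. \<Sum>j\<in>UNIV. G i j) = (\<Sum>p\<in>UNIV. G (fst p) (snd p))"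
    by (simp add: sum.cartesian_product split_def)
  show ?thesis unfolding e
    by (rule T_lin2[OF U, where F="\<lambda>p. F (fst p) (snd p)", OF _ _ t]) (use F in auto)
qed

lemma T_add1:
  assumes U: "open U" and f: "smooth_on U f" and f': "smooth_on U f'" and t: "t \<in> U"
  shows "T \<theta> c (\<lambda>x. f x + f' x) g t = T \<theta> c f g t + T \<theta> c f' g t"
  using T_lin1[OF U, where S="{True,False}" and F="\<lambda>b. if b then f else f'" and a="\<lambda>_. 1", OF _ _ t] f f'
  by simp

lemma T_add2:
  assumes U: "open U" and f: "smooth_on U f" and f': "smooth_on U f'" and t: "t \<in> U"
  shows "T \<theta> c g (\<lambda>x. f x + f' x) t = T \<theta> c g f t + T \<theta> c g f' t"
  using T_lin2[OF U, where S="{True,False}" and F="\<lambda>b. if b then f else f'" and a="\<lambda>_. 1", OF _ _ t] f f'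
  by simp

lemma T_inner_Suc_left:
  assumes U: "open U" and f: "smooth_on U f" and g: "smooth_on U g" and h: "smooth_on U h" and t: "t \<in> U"
  shows "T \<theta> M (T \<theta> (Suc c) f g) h t = (\<Sum>i\<in>UNIV. \<Sum>j\<in>UNIV. \<theta> i j * T \<theta> M (T \<theta> c (pd i f) (pd j g)) h t)"
proof -
  have "T \<theta> M (T \<theta> (Suc c) f g) h t = T \<theta> M (\<lambda>x. \<Sum>i\<in>UNIV. \<Sum>j\<in>UNIV. \<theta> i j * T \<theta> c (pd i f) (pd j g) x) h t"
    by (rule T_local[OF U _ _ t]) (auto simp: T_Suc[OF U f g])
  also have "\<dots> = (\<Sum>i\<in>UNIV. \<Sum>j\<in>UNIV. \<theta> i j * T \<theta> M (T \<theta> c (pd i f) (pd j g)) h t)"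
    by (rule T_lin1_2[OF U _ t]) (intro T_smooth[OF U] smooth_pd f g)
  finally show ?thesis .
qed

lemma T_inner_Suc_right:
  assumes U: "open U" and f: "smooth_on U f" and g: "smooth_on U g" and h: "smooth_on U h" and t: "t \<in> U"
  shows "T \<theta> M f (T \<theta> (Suc c) g h) t = (\<Sum>i\<in>UNIV. \<Sum>j\<in>UNIV. \<theta> i j * T \<theta> M f (T \<theta> c (pd i g) (pd j h)) t)"
proof -
  have "T \<theta> M f (T \<theta> (Suc c) g h) t = T \<theta> M f (\<lambda>x. \<Sum>i\<in>UNIV. \<Sum>j\<in>UNIV. \<theta> i j * T \<theta> c (pd i g) (pd j h) x) t"
    by (rule T_local[OF U _ _ t]) (auto simp: T_Suc[OF U g h])
  also have "\<dots> = (\<Sum>i\<in>UNIV. \<Sum>j\<in>UNIV. \<theta> i j * T \<theta> M f (T \<theta> c (pd i g) (pd j h)) t)"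
    by (rule T_lin2_2[OF U _ t]) (intro T_smooth[OF U] smooth_pd g h)
  finally show ?thesis .
qed

lemma T_outer_Suc_left:
  assumes U: "open U" and f: "smooth_on U f" and g: "smooth_on U g" and h: "smooth_on U h" and t: "t \<in> U"
  shows "T \<theta> (Suc M) (T \<theta> c f g) h t = (\<Sum>i\<in>UNIV. \<Sum>j\<in>UNIV. \<theta> i j *
      (T \<theta> M (T \<theta> c (pd i f) g) (pd j h) t + T \<theta> M (T \<theta> c f (pd i g)) (pd j h) t))"
proof -
  have "T \<theta> (Suc M) (T \<theta> c f g) h t = (\<Sum>i\<in>UNIV. \<Sum>j\<in>UNIV. \<theta> i j * T \<theta> M (pd i (T \<theta> c f g)) (pd j h) t)"
    by (rule T_Suc[OF U T_smooth[OF U f g] h t])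
  also have "\<dots> = (\<Sum>i\<in>UNIV. \<Sum>j\<in>UNIV. \<theta> i j * T \<theta> M (\<lambda>x. T \<theta> c (pd i f) g x + T \<theta> c f (pd i g) x) (pd j h) t)"
    by (intro sum.cong refl arg_cong2[where f="(*)"] T_local[OF U _ _ t]) (auto simp: T_deriv[OF U f g])
  also have "\<dots> = (\<Sum>i\<in>UNIV. \<Sum>j\<in>UNIV. \<theta> i j *
      (T \<theta> M (T \<theta> c (pd i f) g) (pd j h) t + T \<theta> M (T \<theta> c f (pd i g)) (pd j h) t))"
    by (intro sum.cong refl arg_cong2[where f="(*)"] T_add1[OF U _ _ t] T_smooth[OF U] smooth_pd f g)
  finally show ?thesis .
qed

lemma T_outer_Suc_right:
  assumes U: "open U" and f: "smooth_on U f" and g: "smooth_on U g" and h: "smooth_on U h" and t: "t \<in> U"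
  shows "T \<theta> (Suc M) f (T \<theta> c g h) t = (\<Sum>i\<in>UNIV. \<Sum>j\<in>UNIV. \<theta> i j *
      (T \<theta> M (pd i f) (T \<theta> c (pd j g) h) t + T \<theta> M (pd i f) (T \<theta> c g (pd j h)) t))"
proof -
  have "T \<theta> (Suc M) f (T \<theta> c g h) t = (\<Sum>i\<in>UNIV. \<Sum>j\<in>UNIV. \<theta> i j * T \<theta> M (pd i f) (pd j (T \<theta> c g h)) t)"
    by (rule T_Suc[OF U f T_smooth[OF U g h] t])
  also have "\<dots> = (\<Sum>i\<in>UNIV. \<Sum>j\<in>UNIV. \<theta> i j * T \<theta> M (pd i f) (\<lambda>x. T \<theta> c (pd j g) h x + T \<theta> c g (pd j h) x) t)"
    by (intro sum.cong refl arg_cong2[where f="(*)"] T_local[OF U _ _ t]) (auto simp: T_deriv[OF U g h])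
  also have "\<dots> = (\<Sum>i\<in>UNIV. \<Sum>j\<in>UNIV. \<theta> i j *
      (T \<theta> M (pd i f) (T \<theta> c (pd j g) h) t + T \<theta> M (pd i f) (T \<theta> c g (pd j h)) t))"
    by (intro sum.cong refl arg_cong2[where f="(*)"] T_add2[OF U _ _ t] T_smooth[OF U] smooth_pd g h)
  finally show ?thesis .
qed

definition wt :: "nat \<Rightarrow> nat \<Rightarrow> real" where
  "wt c M = 1 / (fact c * fact (M - c))"

lemma gen_rec:
  "real (Suc N) * (\<Sum>c\<le>Suc N. wt c (Suc N) * X c (Suc N - c)) =
     (\<Sum>c\<le>N. wt c N * X (Suc c) (N - c)) + (\<Sum>c\<le>N. wt c N * X c (Suc (N - c)))"
proof -
  have "real (Suc N) * (\<Sum>c\<le>Suc N. wt c (Suc N) * X c (Suc N - c)) =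
      (\<Sum>c\<le>Suc N. real c * wt c (Suc N) * X c (Suc N - c) + real (Suc N - c) * wt c (Suc N) * X c (Suc N - c))"
    unfolding sum_distrib_left
  proof (intro sum.cong refl)
    fix c assume "c \<in> {..Suc N}"
    then have "real (Suc N) = real c + real (Suc N - c)" by (simp add: of_nat_diff)
    then show "real (Suc N) * (wt c (Suc N) * X c (Suc N - c)) =
       real c * wt c (Suc N) * X c (Suc N - c) + real (Suc N - c) * wt c (Suc N) * X c (Suc N - c)"
      by (simp only: distrib_right mult.assoc)
  qed
  also have "\<dots> = (\<Sum>c\<le>Suc N. real c * wt c (Suc N) * X c (Suc N - c)) + (\<Sum>c\<le>Suc N. real (Suc N - c) * wt c (Suc N) * X c (Suc N - c))"
    by (rule sum.distrib)
  also have "(\<Sum>c\<le>Suc N. real c * wt c (Suc N) * X c (Suc N - c)) = (\<Sum>c\<le>N. wt c N * X (Suc c) (N - c))"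
  proof -
    have "(\<Sum>c\<le>Suc N. real c * wt c (Suc N) * X c (Suc N - c)) = (\<Sum>c\<le>N. real (Suc c) * wt (Suc c) (Suc N) * X (Suc c) (N - c))"
      by (subst sum.atMost_Suc_shift) simp
    also have "\<dots> = (\<Sum>c\<le>N. wt c N * X (Suc c) (N - c))"
      by (intro sum.cong refl) (simp add: wt_def del: of_nat_Suc)
    finally show ?thesis .
  qed
  also have "(\<Sum>c\<le>Suc N. real (Suc N - c) * wt c (Suc N) * X c (Suc N - c)) = (\<Sum>c\<le>N. wt c N * X c (Suc (N - c)))"
  proof -
    have "(\<Sum>c\<le>Suc N. real (Suc N - c) * wt c (Suc N) * X c (Suc N - c)) = (\<Sum>c\<le>N. real (Suc N - c) * wt c (Suc N) * X c (Suc N - c))"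
      by (subst sum.atMost_Suc) simp
    also have "\<dots> = (\<Sum>c\<le>N. wt c N * X c (Suc (N - c)))"
      by (intro sum.cong refl) (simp add: wt_def Suc_diff_le del: of_nat_Suc)
    finally show ?thesis .
  qed
  finally show ?thesis .
qed


definition LL where
  "LL \<theta> N f g h t = (\<Sum>c\<le>N. wt c N * T \<theta> (N - c) (T \<theta> c f g) h t)"
definition RRR where
  "RRR \<theta> N f g h t = (\<Sum>c\<le>N. wt c N * T \<theta> (N - c) f (T \<theta> c g h) t)"

lemma swap3: "(\<Sum>c\<in>C. \<Sum>i\<in>I. \<Sum>j\<in>J. G c i j) = (\<Sum>i\<in>I. \<Sum>j\<in>J. \<Sum>c\<in>C. G c i j)"
proof -
  have "(\<Sum>c\<in>C. \<Sum>i\<in>I. \<Sum>j\<in>J. G c i j) = (\<Sum>i\<in>I. \<Sum>c\<in>C. \<Sum>j\<in>J. G c i j)"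
    by (rule sum.swap)
  also have "\<dots> = (\<Sum>i\<in>I. \<Sum>j\<in>J. \<Sum>c\<in>C. G c i j)"
    by (rule sum.cong[OF refl], rule sum.swap)
  finally show ?thesis .
qed

lemma comb: "(\<Sum>c\<in>C. w c * (a * x c)) + (\<Sum>c\<in>C. w c * (a * (y c + z c))) =
   (a::real) * ((\<Sum>c\<in>C. w c * x c) + (\<Sum>c\<in>C. w c * y c) + (\<Sum>c\<in>C. w c * z c))"
  by (simp add: sum_distrib_left distrib_left sum.distrib mult.left_commute)

lemma comb2: "(\<Sum>c\<in>C. w c * (a * x c)) + (\<Sum>c\<in>C. w c * (a * (y c + z c))) =
   (a::real) * ((\<Sum>c\<in>C. w c * y c) + (\<Sum>c\<in>C. w c * z c) + (\<Sum>c\<in>C. w c * x c))"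
  by (simp add: sum_distrib_left distrib_left sum.distrib mult.left_commute)

lemma LL_rec:
  assumes U: "open U" and f: "smooth_on U f" and g: "smooth_on U g" and h: "smooth_on U h" and t: "t \<in> U"
  shows "real (Suc N) * LL \<theta> (Suc N) f g h t = (\<Sum>i\<in>UNIV. \<Sum>j\<in>UNIV. \<theta> i j *
     (LL \<theta> N (pd i f) (pd j g) h t + LL \<theta> N (pd i f) g (pd j h) t + LL \<theta> N f (pd i g) (pd j h) t))"
proof -
  have "real (Suc N) * LL \<theta> (Suc N) f g h t =
     (\<Sum>c\<le>N. wt c N * T \<theta> (N - c) (T \<theta> (Suc c) f g) h t) + (\<Sum>c\<le>N. wt c N * T \<theta> (Suc (N - c)) (T \<theta> c f g) h t)"
    unfolding LL_def by (rule gen_rec[where X="\<lambda>c M. T \<theta> M (T \<theta> c f g) h t"])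
  also have "\<dots> = (\<Sum>c\<le>N. \<Sum>i\<in>UNIV. \<Sum>j\<in>UNIV. wt c N * (\<theta> i j * T \<theta> (N - c) (T \<theta> c (pd i f) (pd j g)) h t))
     + (\<Sum>c\<le>N. \<Sum>i\<in>UNIV. \<Sum>j\<in>UNIV. wt c N * (\<theta> i j *
      (T \<theta> (N - c) (T \<theta> c (pd i f) g) (pd j h) t + T \<theta> (N - c) (T \<theta> c f (pd i g)) (pd j h) t)))"
    by (simp only: sum_distrib_left T_inner_Suc_left[OF U f g h t, where \<theta>=\<theta> and M="N - c" for c] T_outer_Suc_left[OF U f g h t, where \<theta>=\<theta> and M="N - c" for c])
  also have "\<dots> = (\<Sum>i\<in>UNIV. \<Sum>j\<in>UNIV. (\<Sum>c\<le>N. wt c N * (\<theta> i j * T \<theta> (N - c) (T \<theta> c (pd i f) (pd j g)) h t)) +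
      (\<Sum>c\<le>N. wt c N * (\<theta> i j * (T \<theta> (N - c) (T \<theta> c (pd i f) g) (pd j h) t + T \<theta> (N - c) (T \<theta> c f (pd i g)) (pd j h) t))))"
    by (simp only: swap3[where C="{..N}"] sum.distrib)
  also have "\<dots> = (\<Sum>i\<in>UNIV. \<Sum>j\<in>UNIV. \<theta> i j *
     (LL \<theta> N (pd i f) (pd j g) h t + LL \<theta> N (pd i f) g (pd j h) t + LL \<theta> N f (pd i g) (pd j h) t))"
    unfolding LL_def by (rule sum.cong[OF refl], rule sum.cong[OF refl], rule comb)
  finally show ?thesis .
qed

lemma RRR_rec:
  assumes U: "open U" and f: "smooth_on U f" and g: "smooth_on U g" and h: "smooth_on U h" and t: "t \<in> U"
  shows "real (Suc N) * RRR \<theta> (Suc N) f g h t = (\<Sum>i\<in>UNIV. \<Sum>j\<in>UNIV. \<theta> i j *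
     (RRR \<theta> N (pd i f) (pd j g) h t + RRR \<theta> N (pd i f) g (pd j h) t + RRR \<theta> N f (pd i g) (pd j h) t))"
proof -
  have "real (Suc N) * RRR \<theta> (Suc N) f g h t =
     (\<Sum>c\<le>N. wt c N * T \<theta> (N - c) f (T \<theta> (Suc c) g h) t) + (\<Sum>c\<le>N. wt c N * T \<theta> (Suc (N - c)) f (T \<theta> c g h) t)"
    unfolding RRR_def by (rule gen_rec[where X="\<lambda>c M. T \<theta> M f (T \<theta> c g h) t"])
  also have "\<dots> = (\<Sum>c\<le>N. \<Sum>i\<in>UNIV. \<Sum>j\<in>UNIV. wt c N * (\<theta> i j * T \<theta> (N - c) f (T \<theta> c (pd i g) (pd j h)) t))
     + (\<Sum>c\<le>N. \<Sum>i\<in>UNIV. \<Sum>j\<in>UNIV. wt c N * (\<theta> i j *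
      (T \<theta> (N - c) (pd i f) (T \<theta> c (pd j g) h) t + T \<theta> (N - c) (pd i f) (T \<theta> c g (pd j h)) t)))"
    by (simp only: sum_distrib_left T_inner_Suc_right[OF U f g h t, where \<theta>=\<theta> and M="N - c" for c] T_outer_Suc_right[OF U f g h t, where \<theta>=\<theta> and M="N - c" for c])
  also have "\<dots> = (\<Sum>i\<in>UNIV. \<Sum>j\<in>UNIV. (\<Sum>c\<le>N. wt c N * (\<theta> i j * T \<theta> (N - c) f (T \<theta> c (pd i g) (pd j h)) t)) +
      (\<Sum>c\<le>N. wt c N * (\<theta> i j * (T \<theta> (N - c) (pd i f) (T \<theta> c (pd j g) h) t + T \<theta> (N - c) (pd i f) (T \<theta> c g (pd j h)) t))))"
    by (simp only: swap3[where C="{..N}"] sum.distrib)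
  also have "\<dots> = (\<Sum>i\<in>UNIV. \<Sum>j\<in>UNIV. \<theta> i j *
     (RRR \<theta> N (pd i f) (pd j g) h t + RRR \<theta> N (pd i f) g (pd j h) t + RRR \<theta> N f (pd i g) (pd j h) t))"
    unfolding RRR_def by (rule sum.cong[OF refl], rule sum.cong[OF refl], rule comb2)
  finally show ?thesis .
qed

lemma LL_RRR:
  assumes U: "open U" and f: "smooth_on U f" and g: "smooth_on U g" and h: "smooth_on U h" and t: "t \<in> U"
  shows "LL \<theta> N f g h t = RRR \<theta> N f g h t"
  using f g h t
proof (induction N arbitrary: f g h t)
  case 0
  then show ?case by (simp add: LL_def RRR_def T_0 wt_def)
next
  case (Suc N)
  have "real (Suc N) * LL \<theta> (Suc N) f g h t = real (Suc N) * RRR \<theta> (Suc N) f g h t"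
    unfolding LL_rec[OF U Suc.prems] RRR_rec[OF U Suc.prems]
    using Suc.IH[OF smooth_pd smooth_pd, OF Suc.prems(1,2,3,4)] Suc.IH[OF smooth_pd _ smooth_pd, OF Suc.prems(1,2,3,4)]
      Suc.IH[OF _ smooth_pd smooth_pd, OF Suc.prems(1,2,3,4)] by simp
  then show ?case by simp
qed


definition C3 :: "nat \<Rightarrow> (nat \<times> nat \<times> nat) set" where
  "C3 p = {(c,a,b). c + a + b = p}"
definition C4 :: "nat \<Rightarrow> (nat \<times> nat \<times> nat \<times> nat) set" where
  "C4 p = {(c,a,b,r). c + a + b + r = p}"

lemma finite_C3: "finite (C3 p)"
  by (rule finite_subset[of _ "{..p} \<times> {..p} \<times> {..p}"]) (auto simp: C3_def)

lemma finite_C4: "finite (C4 p)"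
  by (rule finite_subset[of _ "{..p} \<times> {..p} \<times> {..p} \<times> {..p}"]) (auto simp: C4_def)

lemma sum_C3: "(\<Sum>c\<le>p. \<Sum>a\<le>p - c. \<phi> c a (p - c - a)) = (\<Sum>(c,a,b)\<in>C3 p. \<phi> c a b)"
proof -
  have "(\<Sum>c\<le>p. \<Sum>a\<le>p - c. \<phi> c a (p - c - a)) = (\<Sum>(c,a)\<in>Sigma {..p} (\<lambda>c. {..p - c}). \<phi> c a (p - c - a))"
    by (rule sum.Sigma) auto
  also have "\<dots> = (\<Sum>(c,a,b)\<in>C3 p. \<phi> c a b)"
    by (rule sum.reindex_bij_witness[where i="\<lambda>(c,a,b). (c,a)" and j="\<lambda>(c,a). (c,a,p - c - a)"])
      (auto simp: C3_def)
  finally show ?thesis .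
qed

lemma mstar_C3: "mstar \<theta> F G p t = (\<Sum>(c,a,b)\<in>C3 p. (1 / fact c) * T \<theta> c (F a) (G b) t)"
  unfolding mstar_T by (rule sum_C3[where \<phi>="\<lambda>c a b. (1 / fact c) * T \<theta> c (F a) (G b) t"])

lemma mstar_C3_fun: "mstar \<theta> F G p = (\<lambda>t. \<Sum>(c,a,b)\<in>C3 p. (1 / fact c) * T \<theta> c (F a) (G b) t)"
  by (rule ext) (rule mstar_C3)

lemma mstar_smooth:
  assumes U: "open U" and F: "moyal_elem U F" and G: "moyal_elem U G"
  shows "moyal_elem U (mstar \<theta> F G)"
  unfolding moyal_elem_def
proof
  fix p
  show "smooth_on U (mstar \<theta> F G p)"
    unfolding mstar_C3_fun split_def
    by (intro smooth_sum[OF U] smooth_cmult[OF U] T_smooth[OF U])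
      (use F G in \<open>auto simp: moyal_elem_def\<close>)
qed

lemma mstar_assoc:
  assumes U: "open U" and F: "moyal_elem U F" and G: "moyal_elem U G" and H: "moyal_elem U H" and t: "t \<in> U"
  shows "mstar \<theta> (mstar \<theta> F G) H p t = mstar \<theta> F (mstar \<theta> G H) p t"
proof -
  have sF: "smooth_on U (F a)" "smooth_on U (G a)" "smooth_on U (H a)" for a
    using F G H by (auto simp: moyal_elem_def)
  have "mstar \<theta> (mstar \<theta> F G) H p t = (\<Sum>(c2,q,r)\<in>C3 p. (1 / fact c2) * T \<theta> c2 (mstar \<theta> F G q) (H r) t)"
    by (rule mstar_C3)
  also have "\<dots> = (\<Sum>(c2,q,r)\<in>C3 p. \<Sum>(c1,a,b)\<in>C3 q. (1 / fact c2) * ((1 / fact c1) * T \<theta> c2 (T \<theta> c1 (F a) (G b)) (H r) t))"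
  proof (rule sum.cong[OF refl], clarify)
    fix c2 q r
    have "T \<theta> c2 (mstar \<theta> F G q) (H r) t = T \<theta> c2 (\<lambda>x. \<Sum>y\<in>C3 q. (1 / fact (fst y)) * T \<theta> (fst y) (F (fst (snd y))) (G (snd (snd y))) x) (H r) t"
      unfolding mstar_C3_fun by (simp add: split_def)
    also have "\<dots> = (\<Sum>y\<in>C3 q. (1 / fact (fst y)) * T \<theta> c2 (T \<theta> (fst y) (F (fst (snd y))) (G (snd (snd y)))) (H r) t)"
      by (rule T_lin1[OF U finite_C3 _ t]) (intro T_smooth[OF U] sF)
    finally show "(1 / fact c2) * T \<theta> c2 (mstar \<theta> F G q) (H r) t = (\<Sum>(c1,a,b)\<in>C3 q. (1 / fact c2) * ((1 / fact c1) * T \<theta> c2 (T \<theta> c1 (F a) (G b)) (H r) t))"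
      by (simp add: split_def sum_distrib_left)
  qed
  also have "\<dots> = (\<Sum>x\<in>Sigma (C3 p) (\<lambda>(c2,q,r). C3 q). (case x of ((c2,q,r),(c1,a,b)) \<Rightarrow>
      (1 / fact c2) * ((1 / fact c1) * T \<theta> c2 (T \<theta> c1 (F a) (G b)) (H r) t)))"
    by (subst sum.Sigma[symmetric]) (auto simp: finite_C3 split_def)
  also have "\<dots> = (\<Sum>y\<in>Sigma (C4 p) (\<lambda>(N,a,b,r). {..N}). (case y of ((N,a,b,r),c1) \<Rightarrow>
      wt c1 N * T \<theta> (N - c1) (T \<theta> c1 (F a) (G b)) (H r) t))"
    by (rule sum.reindex_bij_witness[where i="\<lambda>((N,a,b,r),c1). ((N - c1, c1 + a + b, r),(c1,a,b))"
         and j="\<lambda>((c2,q,r),(c1,a,b)). ((c1 + c2,a,b,r), c1)"])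
      (auto simp: C3_def C4_def wt_def)
  also have "\<dots> = (\<Sum>(N,a,b,r)\<in>C4 p. LL \<theta> N (F a) (G b) (H r) t)"
    by (subst sum.Sigma[symmetric]) (auto simp: finite_C4 split_def LL_def)
  also have "\<dots> = (\<Sum>(N,a,b,r)\<in>C4 p. RRR \<theta> N (F a) (G b) (H r) t)"
    by (rule sum.cong[OF refl], clarify, rule LL_RRR[OF U sF t])
  also have "\<dots> = (\<Sum>y\<in>Sigma (C4 p) (\<lambda>(N,a,b,r). {..N}). (case y of ((N,a,b,r),c1) \<Rightarrow>
      wt c1 N * T \<theta> (N - c1) (F a) (T \<theta> c1 (G b) (H r)) t))"
    by (subst sum.Sigma[symmetric]) (auto simp: finite_C4 split_def RRR_def)
  also have "\<dots> = (\<Sum>x\<in>Sigma (C3 p) (\<lambda>(c2,a,q). C3 q). (case x of ((c2,a,q),(c1,b,r)) \<Rightarrow>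
      (1 / fact c2) * ((1 / fact c1) * T \<theta> c2 (F a) (T \<theta> c1 (G b) (H r)) t)))"
    by (rule sum.reindex_bij_witness[where j="\<lambda>((N,a,b,r),c1). ((N - c1, a, c1 + b + r),(c1,b,r))"
         and i="\<lambda>((c2,a,q),(c1,b,r)). ((c1 + c2,a,b,r), c1)"])
      (auto simp: C3_def C4_def wt_def)
  also have "\<dots> = (\<Sum>(c2,a,q)\<in>C3 p. \<Sum>(c1,b,r)\<in>C3 q. (1 / fact c2) * ((1 / fact c1) * T \<theta> c2 (F a) (T \<theta> c1 (G b) (H r)) t))"
    by (subst sum.Sigma[symmetric]) (auto simp: finite_C3 split_def)
  also have "\<dots> = (\<Sum>(c2,a,q)\<in>C3 p. (1 / fact c2) * T \<theta> c2 (F a) (mstar \<theta> G H q) t)"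
  proof (rule sum.cong[OF refl], clarify)
    fix c2 a q
    have "T \<theta> c2 (F a) (mstar \<theta> G H q) t = T \<theta> c2 (F a) (\<lambda>x. \<Sum>y\<in>C3 q. (1 / fact (fst y)) * T \<theta> (fst y) (G (fst (snd y))) (H (snd (snd y))) x) t"
      unfolding mstar_C3_fun by (simp add: split_def)
    also have "\<dots> = (\<Sum>y\<in>C3 q. (1 / fact (fst y)) * T \<theta> c2 (F a) (T \<theta> (fst y) (G (fst (snd y))) (H (snd (snd y)))) t)"
      by (rule T_lin2[OF U finite_C3 _ t]) (intro T_smooth[OF U] sF)
    finally show "(\<Sum>(c1,b,r)\<in>C3 q. (1 / fact c2) * ((1 / fact c1) * T \<theta> c2 (F a) (T \<theta> c1 (G b) (H r)) t)) = (1 / fact c2) * T \<theta> c2 (F a) (mstar \<theta> G H q) t"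
      by (simp add: split_def sum_distrib_left)
  qed
  also have "\<dots> = mstar \<theta> F (mstar \<theta> G H) p t"
    by (rule mstar_C3[symmetric])
  finally show ?thesis .
qed


lemma mstar_lc1:
  assumes U: "open U" and S: "finite S" and F: "\<And>k. k \<in> S \<Longrightarrow> moyal_elem U (F k)" and t: "t \<in> U"
  shows "mstar \<theta> (\<lambda>p x. \<Sum>k\<in>S. a k * F k p x) G p t = (\<Sum>k\<in>S. a k * mstar \<theta> (F k) G p t)"
proof -
  have "mstar \<theta> (\<lambda>p x. \<Sum>k\<in>S. a k * F k p x) G p t =
      (\<Sum>(c,a',b)\<in>C3 p. (1 / fact c) * (\<Sum>k\<in>S. a k * T \<theta> c (F k a') (G b) t))"
    unfolding mstar_C3
    by (rule sum.cong[OF refl], clarify, subst T_lin1[OF U S _ t]) (use F in \<open>auto simp: moyal_elem_def\<close>)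
  also have "\<dots> = (\<Sum>k\<in>S. a k * mstar \<theta> (F k) G p t)"
    unfolding mstar_C3 sum_distrib_left split_def
    by (subst sum.swap) (simp add: algebra_simps)
  finally show ?thesis .
qed

lemma mstar_lc2:
  assumes U: "open U" and S: "finite S" and F: "\<And>k. k \<in> S \<Longrightarrow> moyal_elem U (F k)" and t: "t \<in> U"
  shows "mstar \<theta> G (\<lambda>p x. \<Sum>k\<in>S. a k * F k p x) p t = (\<Sum>k\<in>S. a k * mstar \<theta> G (F k) p t)"
proof -
  have "mstar \<theta> G (\<lambda>p x. \<Sum>k\<in>S. a k * F k p x) p t =
      (\<Sum>(c,a',b)\<in>C3 p. (1 / fact c) * (\<Sum>k\<in>S. a k * T \<theta> c (G a') (F k b) t))"
    unfolding mstar_C3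
    by (rule sum.cong[OF refl], clarify, subst T_lin2[OF U S _ t]) (use F in \<open>auto simp: moyal_elem_def\<close>)
  also have "\<dots> = (\<Sum>k\<in>S. a k * mstar \<theta> G (F k) p t)"
    unfolding mstar_C3 sum_distrib_left split_def
    by (subst sum.swap) (simp add: algebra_simps)
  finally show ?thesis .
qed

lemma mD_lc:
  assumes U: "open U" and S: "finite S" and F: "\<And>k. k \<in> S \<Longrightarrow> moyal_elem U (F k)" and t: "t \<in> U"
  shows "mD i (\<lambda>p x. \<Sum>k\<in>S. a k * F k p x) p t = (\<Sum>k\<in>S. a k * mD i (F k) p t)"
proof -
  have "pd i (\<lambda>x. \<Sum>k\<in>S. a k * F k p x) t = (\<Sum>k\<in>S. pd i (\<lambda>x. a k * F k p x) t)"
    by (rule pd_sum[OF S _ t]) (use F U in \<open>auto simp: moyal_elem_def intro: smooth_cmult\<close>)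
  also have "\<dots> = (\<Sum>k\<in>S. a k * pd i (F k p) t)"
    by (rule sum.cong[OF refl]) (use F t in \<open>auto simp: moyal_elem_def intro: pd_cmult\<close>)
  finally show ?thesis by (simp add: mD_def)
qed

lemma mD_mstar:
  assumes U: "open U" and F: "moyal_elem U F" and G: "moyal_elem U G" and t: "t \<in> U"
  shows "mD i (mstar \<theta> F G) p t = mstar \<theta> (mD i F) G p t + mstar \<theta> F (mD i G) p t"
proof -
  have sF: "smooth_on U (F a)" "smooth_on U (G a)" for a
    using F G by (auto simp: moyal_elem_def)
  have "mD i (mstar \<theta> F G) p t = pd i (\<lambda>t. \<Sum>y\<in>C3 p. (1 / fact (fst y)) * T \<theta> (fst y) (F (fst (snd y))) (G (snd (snd y))) t) t"
    unfolding mD_def mstar_C3_fun split_def by simp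
  also have "\<dots> = (\<Sum>y\<in>C3 p. pd i (\<lambda>t. (1 / fact (fst y)) * T \<theta> (fst y) (F (fst (snd y))) (G (snd (snd y))) t) t)"
    by (rule pd_sum[OF finite_C3 _ t]) (intro smooth_cmult[OF U] T_smooth[OF U] sF)
  also have "\<dots> = (\<Sum>y\<in>C3 p. (1 / fact (fst y)) * (T \<theta> (fst y) (pd i (F (fst (snd y)))) (G (snd (snd y))) t
         + T \<theta> (fst y) (F (fst (snd y))) (pd i (G (snd (snd y)))) t))"
    by (rule sum.cong[OF refl], subst pd_cmult[OF T_smooth[OF U sF] t], subst T_deriv[OF U sF t]) simp
  also have "\<dots> = mstar \<theta> (mD i F) G p t + mstar \<theta> F (mD i G) p t"
    unfolding mstar_C3 split_def mD_def by (simp add: sum.distrib distrib_left)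
  finally show ?thesis .
qed

lemma mD_comm:
  assumes U: "open U" and F: "moyal_elem U F" and t: "t \<in> U"
  shows "mD i (mD j F) p t = mD j (mD i F) p t"
  unfolding mD_def using schwarz[OF U _ t] F by (simp add: moyal_elem_def)

lemma T_const1: "T \<theta> c (\<lambda>x. k) g t = (if c = 0 then k * g t else 0)"
proof -
  have h: "pds is (\<lambda>x. k) x = (if is = [] then k else 0)" for "is" x
  proof -
    have "pds is (\<lambda>x. k) = (if is = [] then (\<lambda>x. k) else (\<lambda>x. 0))"
      by (induction "is") (auto simp: pd_def)
    then show ?thesis by simp
  qed
  show ?thesis
  proof (cases c)
    case 0 then show ?thesis by (simp add: T_0)
  next
    case (Suc n)
    then have "\<forall>is\<in>{xs. length xs = c}. is \<noteq> []" by auto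
    then show ?thesis unfolding T_def h using Suc by (auto intro!: sum.neutral)
  qed
qed

lemma T_const2: "T \<theta> c g (\<lambda>x. k) t = (if c = 0 then g t * k else 0)"
proof -
  have h: "pds is (\<lambda>x. k) x = (if is = [] then k else 0)" for "is" x
  proof -
    have "pds is (\<lambda>x. k) = (if is = [] then (\<lambda>x. k) else (\<lambda>x. 0))"
      by (induction "is") (auto simp: pd_def)
    then show ?thesis by simp
  qed
  show ?thesis
  proof (cases c)
    case 0 then show ?thesis by (simp add: T_0)
  next
    case (Suc n)
    then have "\<forall>is\<in>{xs. length xs = c}. is \<noteq> []" by auto
    then show ?thesis unfolding T_def h using Suc by (auto intro!: sum.neutral)
  qed
qed

lemma mone_fun: "mone a = (\<lambda>x. if a = 0 then 1 else 0)"
  by (simp add: mone_def)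

lemma mstar_mone1: "mstar \<theta> mone F p t = F p t"
proof -
  have "mstar \<theta> mone F p t = (\<Sum>c\<le>p. \<Sum>a\<le>p - c. (if c = 0 then (if a = 0 then F (p - c - a) t else 0) else 0))"
    unfolding mstar_T mone_fun T_const1 by (intro sum.cong refl) auto
  also have "\<dots> = (\<Sum>c\<le>p. if c = 0 then (\<Sum>a\<le>p - c. if a = 0 then F (p - c - a) t else 0) else 0)"
    by (rule sum.cong) auto
  also have "\<dots> = F p t" by (simp add: sum.delta)
  finally show ?thesis .
qed

lemma mstar_mone2: "mstar \<theta> F mone p t = F p t"
proof -
  have "mstar \<theta> F mone p t = (\<Sum>c\<le>p. \<Sum>a\<le>p - c. (if c = 0 then (if a = p then F a t else 0) else 0))"
    unfolding mstar_T mone_fun T_const2 by (intro sum.cong refl) auto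
  also have "\<dots> = (\<Sum>c\<le>p. if c = 0 then (\<Sum>a\<le>p - c. if a = p then F a t else 0) else 0)"
    by (rule sum.cong) auto
  also have "\<dots> = F p t" by (simp add: sum.delta)
  finally show ?thesis .
qed

lemma mD_const: "mD i (\<lambda>p x. k p) = (\<lambda>p x. 0)"
  by (intro ext) (simp add: mD_def pd_def)

lemma mstar_local:
  assumes U: "open U" and "eqU U F F'" "eqU U G G'" and t: "t \<in> U"
  shows "mstar \<theta> F G p t = mstar \<theta> F' G' p t"
proof -
  have "\<And>c a b. T \<theta> c (F a) (G b) t = T \<theta> c (F' a) (G' b) t"
    by (rule T_local[OF U _ _ t]) (use assms in \<open>auto simp: eqU_def\<close>)
  then show ?thesis unfolding mstar_T by simp
qed

lemma mD_local:
  assumes U: "open U" and "eqU U F F'" and t: "t \<in> U"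
  shows "mD i F p t = mD i F' p t"
  unfolding mD_def using assms pd_local[OF U t] by (simp add: eqU_def)

lemma moyal_mD: "moyal_elem U F \<Longrightarrow> moyal_elem U (mD i F)"
  by (simp add: moyal_elem_def mD_def smooth_pd)

lemma moyal_lc:
  assumes U: "open U" and "\<And>k. k \<in> S \<Longrightarrow> moyal_elem U (F k)"
  shows "moyal_elem U (\<lambda>p x. \<Sum>k\<in>S. a k * F k p x)"
  using assms unfolding moyal_elem_def by (auto intro!: smooth_sum smooth_cmult)

lemma moyal_const: "moyal_elem U (\<lambda>p x. k p)"
  by (simp add: moyal_elem_def smooth_const)


definition nrm :: "(real^'n::finite) set \<Rightarrow> 'n moyal \<Rightarrow> 'n moyal" where
  "nrm U F = (\<lambda>p t. if t \<in> U then F p t else 0)"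

lemma lc_madd: "madd F G = (\<lambda>p x. \<Sum>b\<in>{True,False}. (\<lambda>_. 1::real) b * (if b then F else G) p x)"
  by (auto simp: madd_def fun_eq_iff)
lemma lc_mdiff: "mdiff F G = (\<lambda>p x. \<Sum>b\<in>{True,False}. (\<lambda>b. if b then 1 else -1::real) b * (if b then F else G) p x)"
  by (auto simp: mdiff_def fun_eq_iff)
lemma lc_msmult: "msmult c F = (\<lambda>p x. \<Sum>b\<in>{()}. (\<lambda>_. c) b * (\<lambda>_. F) b p x)"
  by (auto simp: msmult_def fun_eq_iff)
lemma lc_mneg: "mneg F = (\<lambda>p x. \<Sum>b\<in>{()}. (\<lambda>_. -1::real) b * (\<lambda>_. F) b p x)"
  by (auto simp: mneg_def fun_eq_iff)
lemma lc_msum: "msum F S = (\<lambda>p x. \<Sum>k\<in>S. (\<lambda>_. 1::real) k * F k p x)"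
  by (auto simp: msum_def fun_eq_iff)
lemma lc_mzero: "mzero = (\<lambda>p x. \<Sum>k\<in>{}. (\<lambda>_. 1::real) k * (\<lambda>_::unit. mzero) k p x)"
  by (auto simp: mzero_def fun_eq_iff)

lemma nrm_app: "nrm U F p t = (if t \<in> U then F p t else 0)"
  by (simp add: nrm_def)

locale MA =
  fixes U :: "(real^'n::finite) set" and \<theta> :: "'n \<Rightarrow> 'n \<Rightarrow> real"
  assumes opn: "open U"
begin

definition good :: "'n moyal \<Rightarrow> bool" where
  "good F \<longleftrightarrow> moyal_elem U F \<and> nrm U F = F"
definition st :: "'n moyal \<Rightarrow> 'n moyal \<Rightarrow> 'n moyal" where
  "st F G = nrm U (mstar \<theta> F G)"
definition dd :: "'n \<Rightarrow> 'n moyal \<Rightarrow> 'n moyal" where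
  "dd i F = nrm U (mD i F)"
definition one :: "'n moyal" where
  "one = nrm U mone"

lemma eq_nrm: "eqU U F (nrm U F)" by (simp add: eqU_def nrm_def)

lemma moyal_nrm: "moyal_elem U (nrm U F) \<longleftrightarrow> moyal_elem U F"
  unfolding moyal_elem_def
proof (intro iff_allI iffI)
  fix p
  show "smooth_on U (nrm U F p) \<Longrightarrow> smooth_on U (F p)"
    by (erule smooth_local[OF opn]) (simp add: nrm_app)
  show "smooth_on U (F p) \<Longrightarrow> smooth_on U (nrm U F p)"
    by (erule smooth_local[OF opn]) (simp add: nrm_app)
qed

lemma nrm_nrm[simp]: "nrm U (nrm U F) = nrm U F" by (simp add: nrm_def fun_eq_iff)

lemma eqU_iff: "eqU U F G \<longleftrightarrow> nrm U F = nrm U G"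
proof
  assume "eqU U F G" then show "nrm U F = nrm U G" by (auto simp: eqU_def nrm_app fun_eq_iff)
next
  assume "nrm U F = nrm U G"
  then have "nrm U F p t = nrm U G p t" for p t by simp
  then show "eqU U F G" unfolding eqU_def nrm_app by (metis)
qed

lemma nrm_mstar: "nrm U (mstar \<theta> F G) = st (nrm U F) (nrm U G)"
  unfolding st_def
  by (auto simp: fun_eq_iff nrm_app intro!: mstar_local[OF opn eq_nrm eq_nrm])

lemma nrm_mD: "nrm U (mD i F) = dd i (nrm U F)"
  unfolding dd_def
  by (auto simp: fun_eq_iff nrm_app intro!: mD_local[OF opn eq_nrm])

lemma nrm_madd: "nrm U (madd F G) = madd (nrm U F) (nrm U G)" by (simp add: nrm_def madd_def fun_eq_iff)
lemma nrm_mdiff: "nrm U (mdiff F G) = mdiff (nrm U F) (nrm U G)" by (simp add: nrm_def mdiff_def fun_eq_iff)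
lemma nrm_mneg: "nrm U (mneg F) = mneg (nrm U F)" by (simp add: nrm_def mneg_def fun_eq_iff)
lemma nrm_msmult: "nrm U (msmult c F) = msmult c (nrm U F)" by (simp add: nrm_def msmult_def fun_eq_iff)
lemma nrm_msum: "nrm U (msum F S) = msum (\<lambda>k. nrm U (F k)) S" by (simp add: nrm_def msum_def fun_eq_iff)
lemma nrm_mone: "nrm U mone = one" by (simp add: one_def)
lemma nrm_mzero: "nrm U mzero = mzero" by (simp add: nrm_def mzero_def fun_eq_iff)
lemma nrm_if: "nrm U (if b then F else G) = (if b then nrm U F else nrm U G)" by simp

lemmas push = nrm_mstar nrm_mD nrm_madd nrm_mdiff nrm_mneg nrm_msmult nrm_msum nrm_mone nrm_mzero nrm_if

lemma good_nrm: "moyal_elem U F \<Longrightarrow> good (nrm U F)"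
  by (simp add: good_def moyal_nrm)

lemma goodD: "good F \<Longrightarrow> moyal_elem U F" by (simp add: good_def)
lemma goodN: "good F \<Longrightarrow> nrm U F = F" by (simp add: good_def)

lemma good_st[simp]: "good F \<Longrightarrow> good G \<Longrightarrow> good (st F G)"
  unfolding st_def by (intro good_nrm mstar_smooth[OF opn] goodD)

lemma good_dd[simp]: "good F \<Longrightarrow> good (dd i F)"
  unfolding dd_def by (intro good_nrm moyal_mD goodD)

lemma good_one[simp]: "good one"
  unfolding one_def mone_def by (rule good_nrm moyal_const)+

lemma good_mzero[simp]: "good mzero"
  unfolding good_def mzero_def nrm_def by (simp add: moyal_const)

lemma good_lc:
  assumes "\<And>k. k \<in> S \<Longrightarrow> good (F k)"
  shows "good (\<lambda>p x. \<Sum>k\<in>S. a k * F k p x)"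
proof -
  have "moyal_elem U (\<lambda>p x. \<Sum>k\<in>S. a k * F k p x)" by (rule moyal_lc[OF opn]) (use assms goodD in auto)
  moreover have "nrm U (\<lambda>p x. \<Sum>k\<in>S. a k * F k p x) = (\<lambda>p x. \<Sum>k\<in>S. a k * F k p x)"
  proof -
    have "F k p x = 0" if "k \<in> S" "x \<notin> U" for k p x
      using goodN[OF assms[OF that(1)]] that(2) by (metis nrm_def)
    then show ?thesis by (auto simp: nrm_def fun_eq_iff)
  qed
  ultimately show ?thesis by (simp add: good_def)
qed

lemma good_madd[simp]: "good F \<Longrightarrow> good G \<Longrightarrow> good (madd F G)"
  unfolding lc_madd by (rule good_lc) auto
lemma good_mdiff[simp]: "good F \<Longrightarrow> good G \<Longrightarrow> good (mdiff F G)"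
  unfolding lc_mdiff by (rule good_lc) auto
lemma good_msmult[simp]: "good F \<Longrightarrow> good (msmult c F)"
  unfolding lc_msmult by (rule good_lc) auto
lemma good_mneg[simp]: "good F \<Longrightarrow> good (mneg F)"
  unfolding lc_mneg by (rule good_lc) auto
lemma good_msum[simp]: "(\<And>k. k \<in> S \<Longrightarrow> good (F k)) \<Longrightarrow> good (msum F S)"
  unfolding lc_msum by (rule good_lc) auto

lemma mstar_nrm1: "t \<in> U \<Longrightarrow> mstar \<theta> (nrm U F) G p t = mstar \<theta> F G p t"
  by (rule mstar_local[OF opn]) (auto simp: eqU_def nrm_def)
lemma mstar_nrm2: "t \<in> U \<Longrightarrow> mstar \<theta> F (nrm U G) p t = mstar \<theta> F G p t"
  by (rule mstar_local[OF opn]) (auto simp: eqU_def nrm_def)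
lemma mD_nrm: "t \<in> U \<Longrightarrow> mD i (nrm U F) p t = mD i F p t"
  by (rule mD_local[OF opn]) (auto simp: eqU_def nrm_def)

lemma st_assoc:
  assumes "good F" "good G" "good H"
  shows "st (st F G) H = st F (st G H)"
  unfolding st_def
  by (auto simp: fun_eq_iff nrm_app mstar_nrm1 mstar_nrm2
        intro!: mstar_assoc[OF opn] goodD assms)

lemma st_lc1:
  assumes "finite S" "\<And>k. k \<in> S \<Longrightarrow> good (F k)"
  shows "st (\<lambda>p x. \<Sum>k\<in>S. a k * F k p x) G = (\<lambda>p x. \<Sum>k\<in>S. a k * st (F k) G p x)"
  unfolding st_def
  by (auto simp: fun_eq_iff nrm_def mstar_lc1[OF opn assms(1)] goodD assms(2))

lemma st_lc2:
  assumes "finite S" "\<And>k. k \<in> S \<Longrightarrow> good (F k)"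
  shows "st G (\<lambda>p x. \<Sum>k\<in>S. a k * F k p x) = (\<lambda>p x. \<Sum>k\<in>S. a k * st G (F k) p x)"
  unfolding st_def
  by (auto simp: fun_eq_iff nrm_def mstar_lc2[OF opn assms(1)] goodD assms(2))

lemma dd_lc:
  assumes "finite S" "\<And>k. k \<in> S \<Longrightarrow> good (F k)"
  shows "dd i (\<lambda>p x. \<Sum>k\<in>S. a k * F k p x) = (\<lambda>p x. \<Sum>k\<in>S. a k * dd i (F k) p x)"
  unfolding dd_def
  by (auto simp: fun_eq_iff nrm_def mD_lc[OF opn assms(1)] goodD assms(2))

lemma st_madd1: "good F \<Longrightarrow> good G \<Longrightarrow> st (madd F G) H = madd (st F H) (st G H)"
  unfolding lc_madd by (subst st_lc1) auto
lemma st_madd2: "good F \<Longrightarrow> good G \<Longrightarrow> st H (madd F G) = madd (st H F) (st H G)"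
  unfolding lc_madd by (subst st_lc2) auto
lemma st_mdiff1: "good F \<Longrightarrow> good G \<Longrightarrow> st (mdiff F G) H = mdiff (st F H) (st G H)"
  unfolding lc_mdiff by (subst st_lc1) auto
lemma st_mdiff2: "good F \<Longrightarrow> good G \<Longrightarrow> st H (mdiff F G) = mdiff (st H F) (st H G)"
  unfolding lc_mdiff by (subst st_lc2) auto
lemma st_msmult1: "good F \<Longrightarrow> st (msmult c F) H = msmult c (st F H)"
  unfolding lc_msmult by (subst st_lc1) auto
lemma st_msmult2: "good F \<Longrightarrow> st H (msmult c F) = msmult c (st H F)"
  unfolding lc_msmult by (subst st_lc2) auto
lemma st_mneg1: "good F \<Longrightarrow> st (mneg F) H = mneg (st F H)"
  unfolding lc_mneg by (subst st_lc1) auto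
lemma st_mneg2: "good F \<Longrightarrow> st H (mneg F) = mneg (st H F)"
  unfolding lc_mneg by (subst st_lc2) auto
lemma st_msum1: "finite S \<Longrightarrow> (\<And>k. k \<in> S \<Longrightarrow> good (F k)) \<Longrightarrow> st (msum F S) H = msum (\<lambda>k. st (F k) H) S"
  unfolding lc_msum by (subst st_lc1) auto
lemma st_msum2: "finite S \<Longrightarrow> (\<And>k. k \<in> S \<Longrightarrow> good (F k)) \<Longrightarrow> st H (msum F S) = msum (\<lambda>k. st H (F k)) S"
  unfolding lc_msum by (subst st_lc2) auto
lemma st_mzero1: "st mzero H = mzero"
  by (subst lc_mzero, subst st_lc1) (auto simp: mzero_def)
lemma st_mzero2: "st H mzero = mzero"
  by (subst lc_mzero, subst st_lc2) (auto simp: mzero_def)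

lemma dd_madd: "good F \<Longrightarrow> good G \<Longrightarrow> dd i (madd F G) = madd (dd i F) (dd i G)"
  unfolding lc_madd by (subst dd_lc) auto
lemma dd_mdiff: "good F \<Longrightarrow> good G \<Longrightarrow> dd i (mdiff F G) = mdiff (dd i F) (dd i G)"
  unfolding lc_mdiff by (subst dd_lc) auto
lemma dd_msmult: "good F \<Longrightarrow> dd i (msmult c F) = msmult c (dd i F)"
  unfolding lc_msmult by (subst dd_lc) auto
lemma dd_mneg: "good F \<Longrightarrow> dd i (mneg F) = mneg (dd i F)"
  unfolding lc_mneg by (subst dd_lc) auto
lemma dd_msum: "finite S \<Longrightarrow> (\<And>k. k \<in> S \<Longrightarrow> good (F k)) \<Longrightarrow> dd i (msum F S) = msum (\<lambda>k. dd i (F k)) S"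
  unfolding lc_msum by (subst dd_lc) auto
lemma dd_mzero: "dd i mzero = mzero"
  by (simp add: dd_def mzero_def mD_const[of i "\<lambda>p. 0", simplified] nrm_def fun_eq_iff)
lemma dd_one: "dd i one = mzero"
proof -
  have "mD i (nrm U mone) p t = 0" if "t \<in> U" for p t
    using mD_nrm[OF that] mD_const[of i "\<lambda>p. if p = 0 then 1 else 0"] by (simp add: mone_def fun_eq_iff)
  then show ?thesis by (simp add: dd_def one_def nrm_def mzero_def fun_eq_iff)
qed

lemma st_one1: "good F \<Longrightarrow> st one F = F"
  unfolding st_def one_def
  by (auto simp: fun_eq_iff nrm_app mstar_nrm1 mstar_mone1 dest!: goodN)
    (metis nrm_def)
lemma st_one2: "good F \<Longrightarrow> st F one = F"
  unfolding st_def one_def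
  by (auto simp: fun_eq_iff nrm_app mstar_nrm2 mstar_mone2 dest!: goodN)
    (metis nrm_def)

lemma dd_st: "good F \<Longrightarrow> good G \<Longrightarrow> dd i (st F G) = madd (st (dd i F) G) (st F (dd i G))"
  unfolding st_def dd_def
  by (auto simp: fun_eq_iff nrm_app madd_def mstar_nrm1 mstar_nrm2 mD_nrm
      intro!: mD_mstar[OF opn] goodD)

lemma dd_comm: "good F \<Longrightarrow> dd i (dd j F) = dd j (dd i F)"
  unfolding dd_def
  by (auto simp: fun_eq_iff nrm_app mD_nrm intro!: mD_comm[OF opn] goodD)

end


lemma msum_swap: "msum (\<lambda>k. msum (\<lambda>l. F k l) B) A = msum (\<lambda>l. msum (\<lambda>k. F k l) A) B"
  unfolding msum_def by (intro ext) (rule sum.swap)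
lemma msum_madd: "msum (\<lambda>k. madd (A k) (B k)) S = madd (msum A S) (msum B S)"
  unfolding msum_def madd_def by (simp add: sum.distrib)
lemma msum_mneg: "msum (\<lambda>k. mneg (A k)) S = mneg (msum A S)"
  unfolding msum_def mneg_def by (simp add: sum_negf)
lemma msum_mzero: "msum (\<lambda>k. mzero) S = mzero"
  unfolding msum_def mzero_def by simp
lemma msum_delta1: "msum (\<lambda>k. if j = k then Y k else mzero) (UNIV :: 'a::finite set) = Y j"
  unfolding msum_def mzero_def by (simp add: if_distrib[of "\<lambda>F. F _ _"] cong: if_cong)
lemma msum_delta2: "msum (\<lambda>k. if k = j then Y k else mzero) (UNIV :: 'a::finite set) = Y j"
  unfolding msum_def mzero_def by (simp add: if_distrib[of "\<lambda>F. F _ _"] cong: if_cong)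
lemma mdiff_madd: "mdiff (madd A B) B = A"
  unfolding mdiff_def madd_def by simp
lemma mdiff_madd2: "mdiff (madd B A) B = A"
  unfolding mdiff_def madd_def by simp
lemma msum_mdiff: "msum (\<lambda>k. mdiff (A k) (B k)) S = mdiff (msum A S) (msum B S)"
  unfolding msum_def mdiff_def by (simp add: sum_subtractf)
lemma msum_rot3: "msum (\<lambda>a. msum (\<lambda>b. msum (\<lambda>c. F a b c) C) B) A = msum (\<lambda>b. msum (\<lambda>c. msum (\<lambda>a. F a b c) A) C) B"
  by (subst msum_swap) (subst msum_swap, rule refl)
lemma madd_zero_neg: "madd A B = mzero \<Longrightarrow> B = mneg A"
  unfolding madd_def mzero_def mneg_def by (simp add: fun_eq_iff add_eq_0_iff)

context MA
begin

lemma st_if1: "good Y \<Longrightarrow> st (if b then one else mzero) Y = (if b then Y else mzero)"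
  by (simp add: st_one1 st_mzero1)
lemma st_if2: "good Y \<Longrightarrow> st Y (if b then one else mzero) = (if b then Y else mzero)"
  by (simp add: st_one2 st_mzero2)

lemmas nf = st_msum1 st_msum2 st_assoc st_madd1 st_madd2 st_mneg1 st_mneg2 msum_madd msum_mneg

end

locale GEO = MA U \<theta> for U :: "(real^'n::finite) set" and \<theta> +
  fixes X :: "'m::finite \<Rightarrow> 'n moyal" and gi :: "'n \<Rightarrow> 'n \<Rightarrow> 'n moyal"
  assumes gX[simp]: "\<And>\<alpha>. good (X \<alpha>)" and ggi[simp]: "\<And>i j. good (gi i j)"
    and inv1: "\<And>i k. msum (\<lambda>j. st (msum (\<lambda>\<alpha>. st (dd i (X \<alpha>)) (dd j (X \<alpha>))) UNIV) (gi j k)) UNIV = (if i = k then one else mzero)"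
    and inv2: "\<And>i k. msum (\<lambda>j. st (gi i j) (msum (\<lambda>\<alpha>. st (dd j (X \<alpha>)) (dd k (X \<alpha>))) UNIV)) UNIV = (if i = k then one else mzero)"
begin

definition "E j \<alpha> = dd j (X \<alpha>)"
definition "g i j = msum (\<lambda>\<alpha>. st (E i \<alpha>) (E j \<alpha>)) UNIV"
definition "Et j \<alpha> = msum (\<lambda>l. st (E l \<alpha>) (gi l j)) UNIV"
definition "e \<alpha> \<beta> = msum (\<lambda>j. st (Et j \<alpha>) (E j \<beta>)) UNIV"
definition "Eu j \<alpha> = msum (\<lambda>k. st (gi j k) (E k \<alpha>)) UNIV"
definition "P i j l = msum (\<lambda>\<alpha>. st (dd i (E j \<alpha>)) (E l \<alpha>)) UNIV"
definition "Q i j l = msum (\<lambda>\<alpha>. st (E j \<alpha>) (dd i (E l \<alpha>))) UNIV"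
definition "dlt i k = (if i = k then one else mzero)"

lemma good_E[simp]: "good (E j \<alpha>)" by (simp add: E_def)
lemma good_g[simp]: "good (g i j)" by (simp add: g_def)
lemma good_Et[simp]: "good (Et j \<alpha>)" by (simp add: Et_def)
lemma good_e[simp]: "good (e \<alpha> \<beta>)" by (simp add: e_def)
lemma good_Eu[simp]: "good (Eu j \<alpha>)" by (simp add: Eu_def)
lemma good_P[simp]: "good (P i j l)" by (simp add: P_def)
lemma good_Q[simp]: "good (Q i j l)" by (simp add: Q_def)
lemma good_dlt[simp]: "good (dlt i k)" by (simp add: dlt_def)

lemma inv1': "msum (\<lambda>j. st (g i j) (gi j k)) UNIV = dlt i k"
  using inv1 by (simp add: g_def E_def dlt_def)
lemma inv2': "msum (\<lambda>j. st (gi i j) (g j k)) UNIV = dlt i k"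
  using inv2 by (simp add: g_def E_def dlt_def)

lemma st_dlt1: "good Y \<Longrightarrow> st (dlt i k) Y = (if i = k then Y else mzero)"
  by (simp add: dlt_def st_if1)
lemma st_dlt2: "good Y \<Longrightarrow> st Y (dlt i k) = (if i = k then Y else mzero)"
  by (simp add: dlt_def st_if2)

lemma E_comm: "dd i (E j \<alpha>) = dd j (E i \<alpha>)"
  by (simp add: E_def dd_comm)

lemma P_sym: "P i j l = P j i l"
  by (simp add: P_def E_comm)
lemma Q_sym: "Q i j l = Q l j i"
  by (simp add: Q_def E_comm)

lemma dd_g: "dd i (g j l) = madd (P i j l) (Q i j l)"
  by (simp add: g_def P_def Q_def dd_msum dd_st msum_madd)

lemma K1: "msum (\<lambda>\<alpha>. st (E j \<alpha>) (Et k \<alpha>)) UNIV = dlt j k"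
proof -
  have "msum (\<lambda>\<alpha>. st (E j \<alpha>) (Et k \<alpha>)) UNIV = msum (\<lambda>l. st (g j l) (gi l k)) UNIV"
    unfolding Et_def g_def by (simp add: nf) (rule msum_swap)
  then show ?thesis by (simp add: inv1')
qed


definition "cG i j l = msmult (1/2) (mdiff (madd (dd i (g j l)) (dd j (g l i))) (dd l (g j i)))"
definition "Ups i j l = msmult (1/2) (mdiff (msum (\<lambda>\<alpha>. st (dd i (E j \<alpha>)) (E l \<alpha>)) UNIV) (msum (\<lambda>\<alpha>. st (E l \<alpha>) (dd i (E j \<alpha>))) UNIV))"
definition "Gl i j l = madd (cG i j l) (Ups i j l)"
definition "Gtl i j l = mdiff (cG i j l) (Ups i j l)"
definition "Gu i j k = msum (\<lambda>l. st (Gl i j l) (gi l k)) UNIV"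
definition "Gtu i j k = msum (\<lambda>l. st (gi k l) (Gtl i j l)) UNIV"
definition "nab i \<zeta> \<beta> = mdiff (dd i (\<zeta> \<beta>)) (msum (\<lambda>\<alpha>. st (\<zeta> \<alpha>) (dd i (e \<alpha> \<beta>))) UNIV)"
definition "nabt i \<xi> \<alpha> = mdiff (dd i (\<xi> \<alpha>)) (msum (\<lambda>\<beta>. st (dd i (e \<alpha> \<beta>)) (\<xi> \<beta>)) UNIV)"

lemma GlP: "Gl i j l = P i j l"
  unfolding Gl_def cG_def Ups_def dd_g P_sym[of l j i] Q_sym[of l j i] Q_sym[of j l i]
  unfolding P_def[of i j l, symmetric] Q_def[of i l j, symmetric]
  by (simp add: madd_def mdiff_def msmult_def fun_eq_iff field_simps)

lemma GtlQ: "Gtl i j l = Q i l j"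
  unfolding Gtl_def cG_def Ups_def dd_g P_sym[of l j i] Q_sym[of l j i] Q_sym[of j l i]
  unfolding P_def[of i j l, symmetric] Q_def[of i l j, symmetric]
  by (simp add: madd_def mdiff_def msmult_def fun_eq_iff field_simps)

lemma good_Gu[simp]: "good (Gu i j k)" by (simp add: Gu_def GlP)
lemma good_Gtu[simp]: "good (Gtu i j k)" by (simp add: Gtu_def GtlQ)

lemma K2: "msum (\<lambda>\<alpha>. st (E j \<alpha>) (e \<alpha> \<beta>)) UNIV = E j \<beta>"
proof -
  have "msum (\<lambda>\<alpha>. st (E j \<alpha>) (e \<alpha> \<beta>)) UNIV = msum (\<lambda>k. st (msum (\<lambda>\<alpha>. st (E j \<alpha>) (Et k \<alpha>)) UNIV) (E k \<beta>)) UNIV"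
    unfolding e_def by (simp add: nf) (rule msum_swap)
  then show ?thesis by (simp add: K1 st_dlt1 msum_delta1)
qed

lemma K3: "msum (\<lambda>\<beta>. st (e \<alpha> \<beta>) (Et k \<beta>)) UNIV = Et k \<alpha>"
proof -
  have "msum (\<lambda>\<beta>. st (e \<alpha> \<beta>) (Et k \<beta>)) UNIV = msum (\<lambda>j. st (Et j \<alpha>) (msum (\<lambda>\<beta>. st (E j \<beta>) (Et k \<beta>)) UNIV)) UNIV"
    unfolding e_def by (simp add: nf) (rule msum_swap)
  then show ?thesis by (simp add: K1 st_dlt2 msum_delta2)
qed

lemma K4: "msum (\<lambda>\<beta>. st (e \<alpha> \<beta>) (E j \<beta>)) UNIV = E j \<alpha>"
proof -
  have "msum (\<lambda>\<beta>. st (e \<alpha> \<beta>) (E j \<beta>)) UNIV = msum (\<lambda>k. st (Et k \<alpha>) (g k j)) UNIV"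
    unfolding e_def g_def by (simp add: nf) (rule msum_swap)
  also have "\<dots> = msum (\<lambda>l. st (E l \<alpha>) (msum (\<lambda>k. st (gi l k) (g k j)) UNIV)) UNIV"
    unfolding Et_def by (simp add: nf) (rule msum_swap)
  finally show ?thesis by (simp add: inv2' st_dlt2 msum_delta2)
qed

lemma K5: "msum (\<lambda>\<alpha>. st (Eu j \<alpha>) (e \<alpha> \<beta>)) UNIV = Eu j \<beta>"
proof -
  have "msum (\<lambda>\<alpha>. st (Eu j \<alpha>) (e \<alpha> \<beta>)) UNIV = msum (\<lambda>k. st (gi j k) (msum (\<lambda>\<alpha>. st (E k \<alpha>) (e \<alpha> \<beta>)) UNIV)) UNIV"
    unfolding Eu_def by (simp add: nf) (rule msum_swap)
  then show ?thesis by (simp add: K2 Eu_def)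
qed

lemma G1:
  assumes gz: "\<And>\<alpha>. good (\<zeta> \<alpha>)" and hz: "\<And>\<beta>. msum (\<lambda>\<alpha>. st (\<zeta> \<alpha>) (e \<alpha> \<beta>)) UNIV = \<zeta> \<beta>"
  shows "nab i \<zeta> \<beta> = msum (\<lambda>\<alpha>. st (dd i (\<zeta> \<alpha>)) (e \<alpha> \<beta>)) UNIV"
proof -
  have "dd i (\<zeta> \<beta>) = dd i (msum (\<lambda>\<alpha>. st (\<zeta> \<alpha>) (e \<alpha> \<beta>)) UNIV)" by (simp only: hz)
  also have "\<dots> = madd (msum (\<lambda>\<alpha>. st (dd i (\<zeta> \<alpha>)) (e \<alpha> \<beta>)) UNIV) (msum (\<lambda>\<alpha>. st (\<zeta> \<alpha>) (dd i (e \<alpha> \<beta>))) UNIV)"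
    using gz by (simp add: dd_msum dd_st msum_madd)
  finally show ?thesis unfolding nab_def by (simp add: mdiff_madd)
qed

lemma G2:
  assumes gz: "\<And>\<alpha>. good (\<xi> \<alpha>)" and hz: "\<And>\<alpha>. msum (\<lambda>\<beta>. st (e \<alpha> \<beta>) (\<xi> \<beta>)) UNIV = \<xi> \<alpha>"
  shows "nabt i \<xi> \<alpha> = msum (\<lambda>\<beta>. st (e \<alpha> \<beta>) (dd i (\<xi> \<beta>))) UNIV"
proof -
  have "dd i (\<xi> \<alpha>) = dd i (msum (\<lambda>\<beta>. st (e \<alpha> \<beta>) (\<xi> \<beta>)) UNIV)" by (simp only: hz)
  also have "\<dots> = madd (msum (\<lambda>\<beta>. st (dd i (e \<alpha> \<beta>)) (\<xi> \<beta>)) UNIV) (msum (\<lambda>\<beta>. st (e \<alpha> \<beta>) (dd i (\<xi> \<beta>))) UNIV)"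
    using gz by (simp add: dd_msum dd_st msum_madd)
  finally show ?thesis unfolding nabt_def by (simp add: mdiff_madd2)
qed

lemma claim1: "nab i (E j) \<beta> = msum (\<lambda>k. st (Gu i j k) (E k \<beta>)) UNIV"
proof -
  have "nab i (E j) \<beta> = msum (\<lambda>\<alpha>. st (dd i (E j \<alpha>)) (e \<alpha> \<beta>)) UNIV"
    by (rule G1) (simp_all add: K2)
  also have "\<dots> = msum (\<lambda>k. st (msum (\<lambda>l. st (P i j l) (gi l k)) UNIV) (E k \<beta>)) UNIV"
    unfolding e_def Et_def P_def by (simp add: nf) (rule msum_rot3)
  finally show ?thesis by (simp add: Gu_def GlP)
qed


lemma dK1: "msum (\<lambda>\<beta>. st (E k \<beta>) (dd i (Et j \<beta>))) UNIV = mneg (msum (\<lambda>\<beta>. st (dd i (E k \<beta>)) (Et j \<beta>)) UNIV)"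
proof -
  have "madd (msum (\<lambda>\<beta>. st (dd i (E k \<beta>)) (Et j \<beta>)) UNIV) (msum (\<lambda>\<beta>. st (E k \<beta>) (dd i (Et j \<beta>))) UNIV)
      = dd i (msum (\<lambda>\<beta>. st (E k \<beta>) (Et j \<beta>)) UNIV)"
    by (simp add: dd_msum dd_st msum_madd)
  also have "\<dots> = mzero" by (simp add: K1 dlt_def dd_one dd_mzero)
  finally show ?thesis by (rule madd_zero_neg)
qed

lemma claim2: "nabt i (Et j) \<alpha> = mneg (msum (\<lambda>k. st (Et k \<alpha>) (Gu k i j)) UNIV)"
proof -
  have "nabt i (Et j) \<alpha> = msum (\<lambda>\<beta>. st (e \<alpha> \<beta>) (dd i (Et j \<beta>))) UNIV"
    by (rule G2) (simp_all add: K3)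
  also have "\<dots> = msum (\<lambda>k. st (Et k \<alpha>) (msum (\<lambda>\<beta>. st (E k \<beta>) (dd i (Et j \<beta>))) UNIV)) UNIV"
    unfolding e_def by (simp add: nf) (rule msum_swap)
  also have "\<dots> = msum (\<lambda>k. st (Et k \<alpha>) (mneg (msum (\<lambda>\<beta>. st (dd i (E k \<beta>)) (Et j \<beta>)) UNIV))) UNIV"
    by (simp only: dK1)
  also have "\<dots> = msum (\<lambda>k. st (Et k \<alpha>) (mneg (msum (\<lambda>l. st (P i k l) (gi l j)) UNIV))) UNIV"
  proof -
    have "msum (\<lambda>\<beta>. st (dd i (E k \<beta>)) (Et j \<beta>)) UNIV = msum (\<lambda>l. st (P i k l) (gi l j)) UNIV" for k
      unfolding Et_def P_def by (simp add: nf) (rule msum_swap)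
    then show ?thesis by simp
  qed
  also have "\<dots> = mneg (msum (\<lambda>k. st (Et k \<alpha>) (Gu k i j)) UNIV)"
    by (simp add: Gu_def GlP P_sym[of k i for k] nf)
  finally show ?thesis .
qed

lemma claim4: "nabt i (E j) \<alpha> = msum (\<lambda>k. st (E k \<alpha>) (Gtu i j k)) UNIV"
proof -
  have "nabt i (E j) \<alpha> = msum (\<lambda>\<beta>. st (e \<alpha> \<beta>) (dd i (E j \<beta>))) UNIV"
    by (rule G2) (simp_all add: K4)
  also have "\<dots> = msum (\<lambda>k. st (Et k \<alpha>) (Q i k j)) UNIV"
    unfolding e_def Q_def by (simp add: nf) (rule msum_swap)
  also have "\<dots> = msum (\<lambda>k. st (E k \<alpha>) (Gtu i j k)) UNIV"
    unfolding Et_def Gtu_def GtlQ by (simp add: nf) (rule msum_swap)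
  finally show ?thesis .
qed

lemma dd_gi: "dd i (gi j m) = mneg (msum (\<lambda>l. st (gi j l) (msum (\<lambda>n. st (dd i (g l n)) (gi n m)) UNIV)) UNIV)"
proof -
  have z: "msum (\<lambda>l. st (dd i (gi j l)) (g l n)) UNIV = mneg (msum (\<lambda>l. st (gi j l) (dd i (g l n))) UNIV)" for n
  proof -
    have "madd (msum (\<lambda>l. st (dd i (gi j l)) (g l n)) UNIV) (msum (\<lambda>l. st (gi j l) (dd i (g l n))) UNIV)
        = dd i (msum (\<lambda>l. st (gi j l) (g l n)) UNIV)"
      by (simp add: dd_msum dd_st msum_madd)
    also have "\<dots> = mzero" by (simp add: inv2' dlt_def dd_one dd_mzero)
    finally have "msum (\<lambda>l. st (gi j l) (dd i (g l n))) UNIV = mneg (msum (\<lambda>l. st (dd i (gi j l)) (g l n)) UNIV)"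
      by (rule madd_zero_neg)
    then show ?thesis by (simp add: mneg_def fun_eq_iff)
  qed
  have "dd i (gi j m) = msum (\<lambda>l. st (dd i (gi j l)) (msum (\<lambda>n. st (g l n) (gi n m)) UNIV)) UNIV"
    by (simp add: inv1' st_dlt2 msum_delta2)
  also have "\<dots> = msum (\<lambda>n. st (msum (\<lambda>l. st (dd i (gi j l)) (g l n)) UNIV) (gi n m)) UNIV"
    by (simp add: nf) (rule msum_swap)
  also have "\<dots> = msum (\<lambda>n. st (mneg (msum (\<lambda>l. st (gi j l) (dd i (g l n))) UNIV)) (gi n m)) UNIV"
    by (simp only: z)
  also have "\<dots> = mneg (msum (\<lambda>l. st (gi j l) (msum (\<lambda>n. st (dd i (g l n)) (gi n m)) UNIV)) UNIV)"
    by (simp add: nf) (rule arg_cong[where f=mneg], rule msum_swap)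
  finally show ?thesis .
qed

lemma CI: "madd (dd i (gi j m)) (msum (\<lambda>k. st (gi j k) (Gu i k m)) UNIV) = mneg (msum (\<lambda>k. st (Gtu i k j) (gi k m)) UNIV)"
proof -
  define A where "A = msum (\<lambda>l. msum (\<lambda>n. st (gi j l) (st (P i l n) (gi n m))) UNIV) UNIV"
  define B where "B = msum (\<lambda>l. msum (\<lambda>n. st (gi j l) (st (Q i l n) (gi n m))) UNIV) UNIV"
  have b: "msum (\<lambda>k. st (Gtu i k j) (gi k m)) UNIV = B"
    unfolding B_def Gtu_def GtlQ by (simp add: nf) (rule msum_swap)
  have a: "msum (\<lambda>k. st (gi j k) (Gu i k m)) UNIV = A"
    unfolding A_def Gu_def GlP by (simp add: nf)
  have d: "dd i (gi j m) = mneg (madd A B)"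
    unfolding A_def B_def dd_gi dd_g by (simp add: nf)
  show ?thesis unfolding a b d by (simp add: madd_def mneg_def fun_eq_iff)
qed

lemma nab_Eu: "nab i (Eu j) \<beta> = madd (msum (\<lambda>k. st (dd i (gi j k)) (E k \<beta>)) UNIV) (msum (\<lambda>k. st (gi j k) (nab i (E k) \<beta>)) UNIV)"
proof -
  have eq1: "dd i (Eu j \<beta>) = madd (msum (\<lambda>k. st (dd i (gi j k)) (E k \<beta>)) UNIV) (msum (\<lambda>k. st (gi j k) (dd i (E k \<beta>))) UNIV)"
    unfolding Eu_def by (simp add: dd_msum dd_st msum_madd)
  have eq2: "msum (\<lambda>\<alpha>. st (Eu j \<alpha>) (dd i (e \<alpha> \<beta>))) UNIV = msum (\<lambda>k. st (gi j k) (msum (\<lambda>\<alpha>. st (E k \<alpha>) (dd i (e \<alpha> \<beta>))) UNIV)) UNIV"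
    unfolding Eu_def by (simp add: nf) (rule msum_swap)
  have eq3: "msum (\<lambda>k. st (gi j k) (nab i (E k) \<beta>)) UNIV = mdiff (msum (\<lambda>k. st (gi j k) (dd i (E k \<beta>))) UNIV)
     (msum (\<lambda>k. st (gi j k) (msum (\<lambda>\<alpha>. st (E k \<alpha>) (dd i (e \<alpha> \<beta>))) UNIV)) UNIV)"
    unfolding nab_def by (simp add: st_mdiff2 msum_mdiff)
  show ?thesis unfolding nab_def[of i "Eu j"] eq1 eq2 eq3 by (simp add: madd_def mdiff_def fun_eq_iff)
qed

lemma claim3: "nab i (Eu j) \<beta> = mneg (msum (\<lambda>k. st (Gtu i k j) (Eu k \<beta>)) UNIV)"
proof -
  have "nab i (Eu j) \<beta> = madd (msum (\<lambda>k. st (dd i (gi j k)) (E k \<beta>)) UNIV) (msum (\<lambda>k. st (gi j k) (msum (\<lambda>m. st (Gu i k m) (E m \<beta>)) UNIV)) UNIV)"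
    by (simp only: nab_Eu claim1)
  also have "\<dots> = msum (\<lambda>m. st (madd (dd i (gi j m)) (msum (\<lambda>k. st (gi j k) (Gu i k m)) UNIV)) (E m \<beta>)) UNIV"
    by (simp add: nf msum_swap[of "\<lambda>k m. st (gi j k) (st (Gu i k m) (E m \<beta>))"])
  also have "\<dots> = msum (\<lambda>m. st (mneg (msum (\<lambda>k. st (Gtu i k j) (gi k m)) UNIV)) (E m \<beta>)) UNIV"
    by (simp only: CI)
  also have "\<dots> = mneg (msum (\<lambda>k. st (Gtu i k j) (Eu k \<beta>)) UNIV)"
    unfolding Eu_def by (simp add: nf) (rule arg_cong[where f=mneg], rule msum_swap)
  finally show ?thesis .
qed

end


theorem lemma4p3:
  fixes U :: "(real^'n::finite) set"
    and \<theta> :: "'n \<Rightarrow> 'n \<Rightarrow> real"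
    and X :: "'m::finite \<Rightarrow> 'n moyal"
    and ginv :: "'n \<Rightarrow> 'n \<Rightarrow> 'n moyal"
  assumes "open U"
    and "\<And>i j. \<theta> i j = - \<theta> j i"
    and "\<And>\<alpha>. moyal_elem U (X \<alpha>)"
    and "\<And>i j. moyal_elem U (ginv i j)"
    and "\<And>i k. eqU U (msum (\<lambda>j. mstar \<theta> (metric \<theta> X i j) (ginv j k)) UNIV)
                        (if i = k then mone else mzero)"
    and "\<And>i k. eqU U (msum (\<lambda>j. mstar \<theta> (ginv i j) (metric \<theta> X j k)) UNIV)
                        (if i = k then mone else mzero)"
  shows "(\<forall>i j \<beta>. eqU U (nabla \<theta> X ginv i (Evec X j) \<beta>)
              (msum (\<lambda>k. mstar \<theta> (Gamma_up \<theta> X ginv i j k) (Evec X k \<beta>)) UNIV))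
       \<and> (\<forall>i j \<alpha>. eqU U (nablat \<theta> X ginv i (Etil \<theta> X ginv j) \<alpha>)
              (mneg (msum (\<lambda>k. mstar \<theta> (Etil \<theta> X ginv k \<alpha>) (Gamma_up \<theta> X ginv k i j)) UNIV)))
       \<and> (\<forall>i j \<beta>. eqU U (nabla \<theta> X ginv i (Eup \<theta> X ginv j) \<beta>)
              (mneg (msum (\<lambda>k. mstar \<theta> (Gammat_up \<theta> X ginv i k j) (Eup \<theta> X ginv k \<beta>)) UNIV)))
       \<and> (\<forall>i j \<alpha>. eqU U (nablat \<theta> X ginv i (Evec X j) \<alpha>)
              (msum (\<lambda>k. mstar \<theta> (Evec X k \<alpha>) (Gammat_up \<theta> X ginv i j k)) UNIV))"
proof -
  interpret MA U \<theta> by unfold_locales (rule assms(1))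
  define nX where "nX \<alpha> = nrm U (X \<alpha>)" for \<alpha>
  define ngi where "ngi i j = nrm U (ginv i j)" for i j
  interpret G: GEO U \<theta> nX ngi
  proof
    show "good (nX \<alpha>)" for \<alpha> unfolding nX_def by (rule good_nrm[OF assms(3)])
    show "good (ngi i j)" for i j unfolding ngi_def by (rule good_nrm[OF assms(4)])
    show "msum (\<lambda>j. st (msum (\<lambda>\<alpha>. st (dd i (nX \<alpha>)) (dd j (nX \<alpha>))) UNIV) (ngi j k)) UNIV = (if i = k then one else mzero)" for i k
      using assms(5)[of i k] unfolding eqU_iff metric_def nX_def ngi_def by (simp only: push)
    show "msum (\<lambda>j. st (ngi i j) (msum (\<lambda>\<alpha>. st (dd j (nX \<alpha>)) (dd k (nX \<alpha>))) UNIV)) UNIV = (if i = k then one else mzero)" for i k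
      using assms(6)[of i k] unfolding eqU_iff metric_def nX_def ngi_def by (simp only: push)
  qed
  note defs = nabla_def nablat_def Evec_def Etil_def Eup_def eproj_def Gamma_up_def Gammat_up_def
    Gamma_low_def Gammat_low_def cGamma_def Upsilon_def metric_def
  note gdefs = G.nab_def G.nabt_def G.E_def G.Et_def G.Eu_def G.e_def G.g_def G.Gu_def G.Gtu_def
    G.Gl_def G.Gtl_def G.cG_def G.Ups_def nX_def ngi_def
  show ?thesis
  proof (intro conjI allI)
    fix i j \<beta>
    show "eqU U (nabla \<theta> X ginv i (Evec X j) \<beta>) (msum (\<lambda>k. mstar \<theta> (Gamma_up \<theta> X ginv i j k) (Evec X k \<beta>)) UNIV)"
      using G.claim1[of i j \<beta>] unfolding eqU_iff defs gdefs by (simp only: push)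
  next
    fix i j \<alpha>
    show "eqU U (nablat \<theta> X ginv i (Etil \<theta> X ginv j) \<alpha>) (mneg (msum (\<lambda>k. mstar \<theta> (Etil \<theta> X ginv k \<alpha>) (Gamma_up \<theta> X ginv k i j)) UNIV))"
      using G.claim2[of i j \<alpha>] unfolding eqU_iff defs gdefs by (simp only: push)
  next
    fix i j \<beta>
    show "eqU U (nabla \<theta> X ginv i (Eup \<theta> X ginv j) \<beta>) (mneg (msum (\<lambda>k. mstar \<theta> (Gammat_up \<theta> X ginv i k j) (Eup \<theta> X ginv k \<beta>)) UNIV))"
      using G.claim3[of i j \<beta>] unfolding eqU_iff defs gdefs by (simp only: push)
  next
    fix i j \<alpha>
    show "eqU U (nablat \<theta> X ginv i (Evec X j) \<alpha>) (msum (\<lambda>k. mstar \<theta> (Evec X k \<alpha>) (Gammat_up \<theta> X ginv i j k)) UNIV)"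
      using G.claim4[of i j \<alpha>] unfolding eqU_iff defs gdefs by (simp only: push)
  qed
qed


end
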